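(* For $a,q>0$, $n\ge1$ and $0\le i,j\le n-1$, $$\frac{Z^{\mathrm{diag}}(i,j,a,q,n)}{Z^{\mathrm{diag}}_n(1,a,q)}=q^{i+j+1}\Bigg(\sum_{\substack{k,l\in\{0,1\}\\(i-k,j-l)\ne(-1,-1)}}a^{k+l}\frac{Z^{\mathrm{diag}}(i-k,j-l,aq,q,n-1)}{(1+a^2q)Z^{\mathrm{diag}}_{n-1}(1,aq,q)}+\frac{a\,\mathbb{I}_{(i,j)=(0,0),\,n\ge1}}{1+a^2q}\Bigg).$$
   Context: Aztec diamond of size $n$: white vertices $\{(x_1,x_2): x_1\text{ odd},\ x_2\text{ even},\ 1\le x_1\le 2n-1,\ 0\le x_2\le 2n\}$, black vertices $\{(x_1,x_2): x_1\text{ even},\ x_2\text{ odd},\ 0\le x_1\le 2n,\ 1\le x_2\le 2n-1\}$, adjacency when the difference is $\pm(1,1)$ or $\pm(-1,1)$. Each edge lies on exactly one face centered at $(2n-2k-1,2n-2l-1)$, $0\le k,l\le n-1$. The $q^{\mathrm{diag}}$ weighting with parameters $b,a,q$: the edges $\{(2n-2k-2,2n-2l-1),(2n-2k-1,2n-2l)\}$ and $\{(2n-2k-1,2n-2l-2),(2n-2k,2n-2l-1)\}$ get weight $b$, the edge $\{(2n-2k-1,2n-2l),(2n-2k,2n-2l-1)\}$ gets weight $aq^{-2\min(k,l)}$, and the edge $\{(2n-2k-2,2n-2l-1),(2n-2k-1,2n-2l-2)\}$ gets weight $aq^{2\min(k,l)+1}$. $Z^{\mathrm{diag}}_n(b,a,q)$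 is the sum over perfect matchings of products of weights ($Z^{\mathrm{diag}}_0=1$). $Z^{\mathrm{diag}}(i,j,a,q,n)$ is the same with $b=1$ for the graph with vertices $(2n-2i-1,2n)$ and $(2n,2n-2j-1)$ removed, and is $0$ unless $i,j\in\{0,\dots,n-1\}$. $\mathbb{I}$ is an indicator. *)

theory Defs
  imports Complex_Main
begin

type_synonym vtx = "int \<times> int"

definition aztec_white :: "nat \<Rightarrow> vtx set" where
  "aztec_white n = {(x1, x2). odd x1 \<and> even x2 \<and> 1 \<le> x1 \<and> x1 \<le> 2 * int n - 1
                      \<and> 0 \<le> x2 \<and> x2 \<le> 2 * int n}"

definition aztec_black :: "nat \<Rightarrow> vtx set" where
  "aztec_black n = {(x1, x2). even x1 \<and> odd x2 \<and> 0 \<le> x1 \<and> x1 \<le> 2 * int n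
                      \<and> 1 \<le> x2 \<and> x2 \<le> 2 * int n - 1}"

definition adj :: "vtx \<Rightarrow> vtx \<Rightarrow> bool" where
  "adj w b \<longleftrightarrow> (fst b - fst w, snd b - snd w) \<in> {(1, 1), (-1, -1), (-1, 1), (1, -1)}"

definition perfect_matchings :: "vtx set \<Rightarrow> vtx set \<Rightarrow> (vtx \<times> vtx) set set" where
  "perfect_matchings W B =
     {M. M \<subseteq> {(w, b). w \<in> W \<and> b \<in> B \<and> adj w b}
         \<and> (\<forall>w\<in>W. \<exists>!b. (w, b) \<in> M) \<and> (\<forall>b\<in>B. \<exists>!w. (w, b) \<in> M)}"

text \<open>q^diag weight of edge (w,b) in the Aztec diamond of size n. The edge lies on the face
  centred at (fst w, snd b) = (2n-2k-1, 2n-2l-1).\<close>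
definition qdiag_weight :: "nat \<Rightarrow> real \<Rightarrow> real \<Rightarrow> real \<Rightarrow> vtx \<times> vtx \<Rightarrow> real" where
  "qdiag_weight n bb a q e =
     (let w = fst e; b = snd e;
          k = (2 * int n - 1 - fst w) div 2; l = (2 * int n - 1 - snd b) div 2;
          m = min k l
      in if snd w = snd b + 1 \<and> fst b = fst w - 1 then bb
         else if snd w = snd b - 1 \<and> fst b = fst w + 1 then bb
         else if snd w = snd b + 1 \<and> fst b = fst w + 1 then a * q powi (- 2 * m)
         else if snd w = snd b - 1 \<and> fst b = fst w - 1 then a * q powi (2 * m + 1)
         else 0)"

definition Zdiag :: "nat \<Rightarrow> real \<Rightarrow> real \<Rightarrow> real \<Rightarrow> real" where
  "Zdiag n bb a q =
     (\<Sum>M\<in>perfect_matchings (aztec_white n) (aztec_black n). \<Prod>e\<in>M. qdiag_weight n bb a q e)"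

definition Zdiag_rem :: "int \<Rightarrow> int \<Rightarrow> real \<Rightarrow> real \<Rightarrow> nat \<Rightarrow> real" where
  "Zdiag_rem i j a q n =
     (if 0 \<le> i \<and> i \<le> int n - 1 \<and> 0 \<le> j \<and> j \<le> int n - 1 then
        (\<Sum>M\<in>perfect_matchings (aztec_white n - {(2 * int n - 2 * i - 1, 2 * int n)})
                                 (aztec_black n - {(2 * int n, 2 * int n - 2 * j - 1)}).
            \<Prod>e\<in>M. qdiag_weight n 1 a q e)
      else 0)"

end

theory Submission
  imports Defs "HOL-Library.FuncSet"
begin
definition pmE :: "vtx set \<Rightarrow> vtx set \<Rightarrow> (vtx \<times> vtx) set \<Rightarrow> (vtx \<times> vtx) set set" where
  "pmE W B E = {M. M \<subseteq> {(w, b). w \<in> W \<and> b \<in> B \<and> (w, b) \<in> E}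
         \<and> (\<forall>w\<in>W. \<exists>!b. (w, b) \<in> M) \<and> (\<forall>b\<in>B. \<exists>!w. (w, b) \<in> M)}"

definition ZE :: "vtx set \<Rightarrow> vtx set \<Rightarrow> (vtx \<times> vtx) set \<Rightarrow> (vtx \<times> vtx \<Rightarrow> real) \<Rightarrow> real" where
  "ZE W B E \<omega> = (\<Sum>M\<in>pmE W B E. \<Prod>e\<in>M. \<omega> e)"

lemma pm_eq: "perfect_matchings W B = pmE W B {(w,b). adj w b}"
  unfolding perfect_matchings_def pmE_def by auto

lemma pmE_sub: "M \<in> pmE W B E \<Longrightarrow> M \<subseteq> W \<times> B"
  unfolding pmE_def by auto

lemma pmE_memE: "M \<in> pmE W B E \<Longrightarrow> (w,b) \<in> M \<Longrightarrow> w \<in> W \<and> b \<in> B \<and> (w,b) \<in> E"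
  unfolding pmE_def by blast

lemma finite_pmE: "finite W \<Longrightarrow> finite B \<Longrightarrow> finite (pmE W B E)"
  by (rule finite_subset[of _ "Pow (W \<times> B)"]) (auto dest: pmE_sub)

lemma finite_pmE_M: "M \<in> pmE W B E \<Longrightarrow> finite W \<Longrightarrow> finite B \<Longrightarrow> finite M"
  using finite_subset[OF pmE_sub] by blast

lemma pmE_fst_bij: assumes "M \<in> pmE W B E" shows "bij_betw fst M W"
proof -
  have inj: "inj_on fst M"
  proof (rule inj_onI)
    fix x y assume "x \<in> M" "y \<in> M" "fst x = fst y"
    have x: "(fst x, snd x) \<in> M" and y: "(fst x, snd y) \<in> M" using \<open>x\<in>M\<close> \<open>y\<in>M\<close> \<open>fst x = fst y\<close> by (metis prod.collapse)+
    have "fst x \<in> W" using x assms unfolding pmE_def by auto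
    then have "\<exists>!b. (fst x, b) \<in> M" using assms unfolding pmE_def by auto
    then have "snd x = snd y" using x y by (metis ex1E)
    then show "x = y" using \<open>fst x = fst y\<close> by (simp add: prod_eq_iff)
  qed
  have "fst ` M \<subseteq> W" using pmE_sub[OF assms] by auto
  moreover have "W \<subseteq> fst ` M"
  proof
    fix w assume "w \<in> W"
    then obtain b where "(w,b) \<in> M" using assms unfolding pmE_def by blast
    then show "w \<in> fst ` M" by (metis fst_conv image_eqI)
  qed
  ultimately have "fst ` M = W" by blast
  then show ?thesis using inj by (simp add: bij_betw_def)
qed

lemma pmE_snd_bij: assumes "M \<in> pmE W B E" shows "bij_betw snd M B"
proof -
  have inj: "inj_on snd M"
  proof (rule inj_onI)
    fix x y assume "x \<in> M" "y \<in> M" "snd x = snd y"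
    have x: "(fst x, snd x) \<in> M" and y: "(fst y, snd x) \<in> M" using \<open>x\<in>M\<close> \<open>y\<in>M\<close> \<open>snd x = snd y\<close> by (metis prod.collapse)+
    have "snd x \<in> B" using x assms unfolding pmE_def by auto
    then have "\<exists>!w. (w, snd x) \<in> M" using assms unfolding pmE_def by auto
    then have "fst x = fst y" using x y by (metis ex1E)
    then show "x = y" using \<open>snd x = snd y\<close> by (simp add: prod_eq_iff)
  qed
  have "snd ` M \<subseteq> B" using pmE_sub[OF assms] by auto
  moreover have "B \<subseteq> snd ` M"
  proof
    fix b assume "b \<in> B"
    then obtain w where "(w,b) \<in> M" using assms unfolding pmE_def by blast
    then show "b \<in> snd ` M" by (metis snd_conv image_eqI)
  qed
  ultimately have "snd ` M = B" by blast
  then show ?thesis using inj by (simp add: bij_betw_def)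
qed

lemma ZE_gauge:
  assumes fin: "finite W" "finite B"
    and h: "\<And>w b. w \<in> W \<Longrightarrow> b \<in> B \<Longrightarrow> (w,b) \<in> E \<Longrightarrow> \<omega> (w,b) = c w * d b * \<omega>0 (w,b)"
  shows "ZE W B E \<omega> = (\<Prod>w\<in>W. c w) * (\<Prod>b\<in>B. d b) * ZE W B E \<omega>0"
  unfolding ZE_def sum_distrib_left
proof (rule sum.cong[OF refl])
  fix M assume M: "M \<in> pmE W B E"
  have "(\<Prod>e\<in>M. \<omega> e) = (\<Prod>e\<in>M. c (fst e) * d (snd e) * \<omega>0 e)"
  proof (rule prod.cong[OF refl])
    fix e assume "e \<in> M"
    then show "\<omega> e = c (fst e) * d (snd e) * \<omega>0 e" using M h unfolding pmE_def
      by (cases e) auto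
  qed
  also have "\<dots> = (\<Prod>e\<in>M. c (fst e)) * (\<Prod>e\<in>M. d (snd e)) * (\<Prod>e\<in>M. \<omega>0 e)"
    by (simp add: prod.distrib)
  also have "(\<Prod>e\<in>M. c (fst e)) = (\<Prod>w\<in>W. c w)"
    using prod.reindex_bij_betw[OF pmE_fst_bij[OF M], of c] by simp
  also have "(\<Prod>e\<in>M. d (snd e)) = (\<Prod>b\<in>B. d b)"
    using prod.reindex_bij_betw[OF pmE_snd_bij[OF M], of d] by simp
  finally show "(\<Prod>e\<in>M. \<omega> e) = (\<Prod>w\<in>W. c w) * (\<Prod>b\<in>B. d b) * (\<Prod>e\<in>M. \<omega>0 e)" .
qed

lemma pmE_swapmap_mem:
  assumes hh: "\<And>v. h' (h v) = v" and hh2: "\<And>v. h (h' v) = v"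
    and E: "\<And>w b. w \<in> W \<Longrightarrow> b \<in> B \<Longrightarrow> (w,b) \<in> E \<Longrightarrow> (h b, h w) \<in> E'"
    and M: "M \<in> pmE W B E"
  shows "(\<lambda>(w,b). (h b, h w)) ` M \<in> pmE (h ` B) (h ` W) E'"
proof -
  define g where "g = (\<lambda>(w::vtx,b::vtx). (h b, h w))"
  have sub: "M \<subseteq> {(w, b). w \<in> W \<and> b \<in> B \<and> (w, b) \<in> E}" 
    and uw: "\<forall>w\<in>W. \<exists>!b. (w, b) \<in> M" and ub: "\<forall>b\<in>B. \<exists>!w. (w, b) \<in> M"
    using M unfolding pmE_def by auto
  have mem: "(x, y) \<in> g ` M \<longleftrightarrow> (h' y, h' x) \<in> M" for x y
  proof
    assume "(x, y) \<in> g ` M"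
    then obtain w b where "(w,b) \<in> M" "x = h b" "y = h w" unfolding g_def by auto
    then show "(h' y, h' x) \<in> M" by (simp add: hh)
  next
    assume a: "(h' y, h' x) \<in> M"
    have "g (h' y, h' x) = (x, y)" unfolding g_def by (simp add: hh2)
    then show "(x, y) \<in> g ` M" using a by (metis image_eqI)
  qed
  have hB: "x \<in> h ` B \<longleftrightarrow> h' x \<in> B" for x
    by (auto simp: hh) (metis hh2 image_eqI)
  have hW: "x \<in> h ` W \<longleftrightarrow> h' x \<in> W" for x
    by (auto simp: hh) (metis hh2 image_eqI)
  have s1: "g ` M \<subseteq> {(w, b). w \<in> h ` B \<and> b \<in> h ` W \<and> (w, b) \<in> E'}"
  proof
    fix p assume "p \<in> g ` M"
    then obtain w b where wb: "(w,b) \<in> M" "p = (h b, h w)" unfolding g_def by auto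
    then have "w \<in> W" "b \<in> B" "(w,b) \<in> E" using sub by auto
    then show "p \<in> {(w, b). w \<in> h ` B \<and> b \<in> h ` W \<and> (w, b) \<in> E'}" using wb E by auto
  qed
  have s2: "\<exists>!y. (x, y) \<in> g ` M" if "x \<in> h ` B" for x
  proof -
    have "h' x \<in> B" using that hB by simp
    then have "\<exists>!w. (w, h' x) \<in> M" using ub by blast
    then obtain w where w: "(w, h' x) \<in> M" "\<And>w'. (w', h' x) \<in> M \<Longrightarrow> w' = w" by blast
    have "\<exists>!y. (h' y, h' x) \<in> M"
      by (rule ex1I[of _ "h w"]) (auto simp: hh w(1), metis hh2 w(2))
    then show ?thesis using mem by simp
  qed
  have s3: "\<exists>!x. (x, y) \<in> g ` M" if "y \<in> h ` W" for y
  proof -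
    have "h' y \<in> W" using that hW by simp
    then have "\<exists>!b. (h' y, b) \<in> M" using uw by blast
    then obtain b where b: "(h' y, b) \<in> M" "\<And>b'. (h' y, b') \<in> M \<Longrightarrow> b' = b" by blast
    have "\<exists>!x. (h' y, h' x) \<in> M"
      by (rule ex1I[of _ "h b"]) (auto simp: hh b(1), metis hh2 b(2))
    then show ?thesis using mem by simp
  qed
  have gM: "(\<lambda>(w,b). (h b, h w)) ` M = g ` M" by (simp add: g_def)
  show ?thesis unfolding gM pmE_def
    by (rule CollectI, intro conjI ballI) (fact s1, erule s2, erule s3)
qed

lemma ZE_swapmap:
  assumes hh: "\<And>v. h' (h v) = v" "\<And>v. h (h' v) = v"
    and E: "\<And>w b. w \<in> W \<Longrightarrow> b \<in> B \<Longrightarrow> (w,b) \<in> E \<longleftrightarrow> (h b, h w) \<in> E'"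
    and om: "\<And>w b. w \<in> W \<Longrightarrow> b \<in> B \<Longrightarrow> (w,b) \<in> E \<Longrightarrow> \<omega> (w,b) = \<omega>2 (h b, h w)"
    and fin: "finite W" "finite B"
  shows "ZE W B E \<omega> = ZE (h ` B) (h ` W) E' \<omega>2"
  unfolding ZE_def
proof (rule sum.reindex_bij_witness[where j = "\<lambda>M. (\<lambda>(w,b). (h b, h w)) ` M"
        and i = "\<lambda>M. (\<lambda>(w,b). (h' b, h' w)) ` M"])
  fix M assume M: "M \<in> pmE W B E"
  have "\<And>x. (\<lambda>(w,b). (h' b, h' w)) ((\<lambda>(w,b). (h b, h w)) x) = x"
    by (simp add: hh split_beta)
  then show "(\<lambda>(w,b). (h' b, h' w)) ` (\<lambda>(w,b). (h b, h w)) ` M = M"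
    by (simp add: image_image)
  show "(\<lambda>(w,b). (h b, h w)) ` M \<in> pmE (h ` B) (h ` W) E'"
    by (rule pmE_swapmap_mem[OF hh(1) hh(2) _ M]) (simp add: E)
  have inj: "inj_on (\<lambda>(w,b). (h b, h w)) M"
    by (rule inj_on_inverseI[where g = "\<lambda>(w,b). (h' b, h' w)"]) (auto simp: hh)
  show "(\<Prod>e\<in>(\<lambda>(w,b). (h b, h w)) ` M. \<omega>2 e) = (\<Prod>e\<in>M. \<omega> e)"
    unfolding prod.reindex[OF inj] comp_def
  proof (intro prod.cong refl)
    fix x assume "x \<in> M"
    obtain w b where xwb: "x = (w,b)" by (cases x)
    then have "w \<in> W" "b \<in> B" "(w,b) \<in> E" using pmE_memE[OF M] \<open>x \<in> M\<close> by auto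
    then show "\<omega>2 ((\<lambda>(w,b). (h b, h w)) x) = \<omega> x" using om xwb by simp
  qed
next
  fix M assume M: "M \<in> pmE (h ` B) (h ` W) E'"
  have "\<And>x. (\<lambda>(w,b). (h b, h w)) ((\<lambda>(w,b). (h' b, h' w)) x) = x"
    by (simp add: hh split_beta)
  then show "(\<lambda>(w,b). (h b, h w)) ` (\<lambda>(w,b). (h' b, h' w)) ` M = M"
    by (simp add: image_image)
  have E': "(h' b, h' w) \<in> E" if a1: "w \<in> h ` B" and a2: "b \<in> h ` W" and a3: "(w,b) \<in> E'" for w b
  proof -
    obtain b0 where b0: "b0 \<in> B" "w = h b0" using a1 by blast
    obtain w0 where w0: "w0 \<in> W" "b = h w0" using a2 by blast
    have "(w0, b0) \<in> E" using E[OF w0(1) b0(1)] a3 b0(2) w0(2) by simp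
    then show ?thesis using b0(2) w0(2) hh by simp
  qed
  have "(\<lambda>(w,b). (h' b, h' w)) ` M \<in> pmE (h' ` h ` W) (h' ` h ` B) E"
    by (rule pmE_swapmap_mem[OF hh(2) hh(1) E' M])
  moreover have "h' ` h ` W = W" "h' ` h ` B = B" by (auto simp: image_image hh)
  ultimately show "(\<lambda>(w,b). (h' b, h' w)) ` M \<in> pmE W B E" by simp
qed

lemma pmE_insert:
  assumes M: "M \<in> pmE (W-{u}) (B-{b}) E" and u: "u \<in> W" and b: "b \<in> B" and ub: "(u,b) \<in> E"
  shows "insert (u,b) M \<in> pmE W B E"
proof -
  have sub: "\<And>x y. (x,y) \<in> M \<Longrightarrow> x \<in> W-{u} \<and> y \<in> B-{b} \<and> (x,y) \<in> E"
    using pmE_memE[OF M] by blast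
  have uw: "\<forall>w\<in>W-{u}. \<exists>!y. (w,y) \<in> M" and uB: "\<forall>y\<in>B-{b}. \<exists>!x. (x,y) \<in> M"
    using M unfolding pmE_def by blast+
  have s1: "insert (u,b) M \<subseteq> {(w, b). w \<in> W \<and> b \<in> B \<and> (w, b) \<in> E}"
    using sub u b ub by auto
  have s2: "\<exists>!y. (w,y) \<in> insert (u,b) M" if w: "w \<in> W" for w
  proof (cases "w = u")
    case True
    show ?thesis
    proof (rule ex1I[of _ b])
      show "(w,b) \<in> insert (u,b) M" using True by simp
      fix y assume "(w,y) \<in> insert (u,b) M"
      then show "y = b" using sub[of u y] True by auto
    qed
  next
    case False
    then have "\<exists>!y. (w,y) \<in> M" using uw w by blast
    then show ?thesis using False by auto
  qed
  have s3: "\<exists>!x. (x,y) \<in> insert (u,b) M" if y: "y \<in> B" for y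
  proof (cases "y = b")
    case True
    show ?thesis
    proof (rule ex1I[of _ u])
      show "(u,y) \<in> insert (u,b) M" using True by simp
      fix x assume "(x,y) \<in> insert (u,b) M"
      then show "x = u" using sub[of x b] True by auto
    qed
  next
    case False
    then have "\<exists>!x. (x,y) \<in> M" using uB y by blast
    then show ?thesis using False by auto
  qed
  show ?thesis unfolding pmE_def
    by (rule CollectI, intro conjI ballI) (fact s1, erule s2, erule s3)
qed

lemma pmE_remove:
  assumes M: "M \<in> pmE W B E" and u: "u \<in> W"
  defines "p \<equiv> THE b. (u,b) \<in> M"
  shows "(u,p) \<in> M" "p \<in> B" "(u,p) \<in> E" "M - {(u,p)} \<in> pmE (W-{u}) (B-{p}) E"
proof -
  have uw: "\<forall>w\<in>W. \<exists>!y. (w,y) \<in> M" and uB: "\<forall>y\<in>B. \<exists>!x. (x,y) \<in> M"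
    using M unfolding pmE_def by blast+
  have ex: "\<exists>!b. (u,b) \<in> M" using uw u by blast
  show up: "(u,p) \<in> M" unfolding p_def using theI'[OF ex] .
  show "p \<in> B" "(u,p) \<in> E" using pmE_memE[OF M up] by auto
  have sub: "\<And>x y. (x,y) \<in> M \<Longrightarrow> x \<in> W \<and> y \<in> B \<and> (x,y) \<in> E"
    using pmE_memE[OF M] by blast
  have s1: "M - {(u,p)} \<subseteq> {(w, b). w \<in> W-{u} \<and> b \<in> B-{p} \<and> (w, b) \<in> E}"
  proof
    fix e assume e: "e \<in> M - {(u,p)}"
    obtain x y where xy: "e = (x,y)" by (cases e)
    have "x \<noteq> u" using e xy ex up by auto
    moreover have "y \<noteq> p"
    proof
      assume "y = p"
      then have "x = u" using uB sub e xy up by (metis DiffD1)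
      then show False using \<open>x \<noteq> u\<close> by simp
    qed
    ultimately show "e \<in> {(w, b). w \<in> W-{u} \<and> b \<in> B-{p} \<and> (w, b) \<in> E}" using sub e xy by auto
  qed
  have s2: "\<exists>!y. (w,y) \<in> M - {(u,p)}" if w: "w \<in> W-{u}" for w
    using uw w by auto
  have s3: "\<exists>!x. (x,y) \<in> M - {(u,p)}" if y: "y \<in> B-{p}" for y
    using uB y by auto
  show "M - {(u,p)} \<in> pmE (W-{u}) (B-{p}) E" unfolding pmE_def
    by (rule CollectI, intro conjI ballI) (fact s1, erule s2, erule s3)
qed

lemma ZE_expand:
  assumes fin: "finite W" "finite B" and u: "u \<in> W"
  shows "ZE W B E \<omega> = (\<Sum>b\<in>{b\<in>B. (u,b)\<in>E}. \<omega> (u,b) * ZE (W - {u}) (B - {b}) E \<omega>)"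
proof -
  let ?N = "{b\<in>B. (u,b)\<in>E}"
  have "(\<Sum>b\<in>?N. \<omega> (u,b) * ZE (W-{u}) (B-{b}) E \<omega>)
      = (\<Sum>b\<in>?N. \<Sum>M\<in>pmE (W-{u}) (B-{b}) E. \<Prod>e\<in>insert (u,b) M. \<omega> e)"
  proof (rule sum.cong[OF refl])
    fix b assume b: "b \<in> ?N"
    show "\<omega> (u,b) * ZE (W-{u}) (B-{b}) E \<omega> = (\<Sum>M\<in>pmE (W-{u}) (B-{b}) E. \<Prod>e\<in>insert (u,b) M. \<omega> e)"
      unfolding ZE_def sum_distrib_left
    proof (rule sum.cong[OF refl])
      fix M assume M: "M \<in> pmE (W-{u}) (B-{b}) E"
      have "finite M" using finite_pmE_M[OF M] fin by auto
      moreover have "(u,b) \<notin> M" using pmE_memE[OF M, of u b] by auto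
      ultimately show "\<omega> (u,b) * prod \<omega> M = (\<Prod>e\<in>insert (u,b) M. \<omega> e)" by simp
    qed
  qed
  also have "\<dots> = (\<Sum>(b,M)\<in>Sigma ?N (\<lambda>b. pmE (W-{u}) (B-{b}) E). \<Prod>e\<in>insert (u,b) M. \<omega> e)"
    by (rule sum.Sigma) (use fin in \<open>auto intro: finite_pmE\<close>)
  also have "\<dots> = ZE W B E \<omega>" unfolding ZE_def
  proof (rule sum.reindex_bij_witness[where j = "\<lambda>(b,M). insert (u,b) M"
          and i = "\<lambda>M. (THE b. (u,b)\<in>M, M - {(u, THE b. (u,b)\<in>M)})"])
    fix a assume a: "a \<in> Sigma ?N (\<lambda>b. pmE (W-{u}) (B-{b}) E)"
    obtain b M where abM: "a = (b,M)" by (cases a)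
    have b: "b \<in> B" "(u,b) \<in> E" and M: "M \<in> pmE (W-{u}) (B-{b}) E" using a abM by auto
    have nu: "\<And>y. (u,y) \<notin> M" using pmE_memE[OF M] by blast
    have th: "(THE y. (u,y) \<in> insert (u,b) M) = b"
      by (rule the_equality) (use nu in auto)
    show "(\<lambda>M. (THE b. (u,b)\<in>M, M - {(u, THE b. (u,b)\<in>M)})) ((\<lambda>(b,M). insert (u,b) M) a) = a"
      using th nu abM by auto
    show "(\<lambda>(b,M). insert (u,b) M) a \<in> pmE W B E"
      using pmE_insert[OF M u b] abM by simp
    show "(\<Prod>e\<in>(\<lambda>(b,M). insert (u,b) M) a. \<omega> e) = (case a of (b,M) \<Rightarrow> \<Prod>e\<in>insert (u,b) M. \<omega> e)"
      using abM by simp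
  next
    fix M assume M: "M \<in> pmE W B E"
    note r = pmE_remove[OF M u]
    show "(\<lambda>(b,M). insert (u,b) M) ((\<lambda>M. (THE b. (u,b)\<in>M, M - {(u, THE b. (u,b)\<in>M)})) M) = M"
      using r(1) by auto
    show "(\<lambda>M. (THE b. (u,b)\<in>M, M - {(u, THE b. (u,b)\<in>M)})) M \<in> Sigma ?N (\<lambda>b. pmE (W-{u}) (B-{b}) E)"
      using r(2,3,4) by auto
  qed
  finally show ?thesis by simp
qed

lemma ZE_swap: "finite W \<Longrightarrow> finite B \<Longrightarrow>
  ZE W B E \<omega> = ZE B W {(x,y). (y,x) \<in> E} (\<lambda>(x,y). \<omega> (y,x))"
  using ZE_swapmap[of id id W B E "{(x,y). (y,x) \<in> E}" \<omega> "\<lambda>(x,y). \<omega> (y,x)"] by simp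

lemma ZE_expand_black:
  assumes fin: "finite W" "finite B" and r: "r \<in> B"
  shows "ZE W B E \<omega> = (\<Sum>w\<in>{w\<in>W. (w,r)\<in>E}. \<omega> (w,r) * ZE (W - {w}) (B - {r}) E \<omega>)"
proof -
  have "ZE W B E \<omega> = ZE B W {(x,y). (y,x) \<in> E} (\<lambda>(x,y). \<omega> (y,x))" by (rule ZE_swap[OF fin])
  also have "\<dots> = (\<Sum>w\<in>{w\<in>W. (r,w)\<in>{(x,y). (y,x) \<in> E}}. (\<lambda>(x,y). \<omega> (y,x)) (r,w) *
        ZE (B - {r}) (W - {w}) {(x,y). (y,x) \<in> E} (\<lambda>(x,y). \<omega> (y,x)))"
    by (rule ZE_expand) (use fin r in auto)
  also have "\<dots> = (\<Sum>w\<in>{w\<in>W. (w,r)\<in>E}. \<omega> (w,r) * ZE (W - {w}) (B - {r}) E \<omega>)"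
  proof (rule sum.cong)
    fix w assume "w \<in> {w\<in>W. (w,r)\<in>E}"
    have "ZE (W - {w}) (B - {r}) E \<omega> = ZE (B - {r}) (W - {w}) {(x,y). (y,x) \<in> E} (\<lambda>(x,y). \<omega> (y,x))"
      by (rule ZE_swap) (use fin in auto)
    then show "(\<lambda>(x,y). \<omega> (y,x)) (r,w) * ZE (B - {r}) (W - {w}) {(x,y). (y,x) \<in> E} (\<lambda>(x,y). \<omega> (y,x))
       = \<omega> (w,r) * ZE (W - {w}) (B - {r}) E \<omega>" by simp
  qed auto
  finally show ?thesis .
qed

lemma pmE_empty: "pmE {} {} E = {{}}"
  unfolding pmE_def by auto

lemma ZE_empty: "ZE {} {} E \<omega> = 1"
  unfolding ZE_def pmE_empty by simp

lemma ZE_single: "(w,b) \<in> E \<Longrightarrow> ZE {w} {b} E \<omega> = \<omega> (w,b)"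
proof -
  assume e: "(w,b) \<in> E"
  have "ZE {w} {b} E \<omega> = (\<Sum>b'\<in>{b'\<in>{b}. (w,b')\<in>E}. \<omega> (w,b') * ZE ({w} - {w}) ({b} - {b'}) E \<omega>)"
    by (rule ZE_expand) auto
  also have "{b'\<in>{b}. (w,b')\<in>E} = {b}" using e by auto
  finally show ?thesis by (simp add: ZE_empty)
qed

lemma ZE_card:
  assumes "finite W" "finite B" "card W \<noteq> card B"
  shows "ZE W B E \<omega> = 0"
proof -
  have "pmE W B E = {}"
  proof (rule ccontr)
    assume "pmE W B E \<noteq> {}"
    then obtain M where M: "M \<in> pmE W B E" by blast
    have "card M = card W" using bij_betw_same_card[OF pmE_fst_bij[OF M]] .
    moreover have "card M = card B" using bij_betw_same_card[OF pmE_snd_bij[OF M]] .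
    ultimately show False using assms(3) by simp
  qed
  then show ?thesis unfolding ZE_def by simp
qed

lemma ZE_two:
  assumes "w1 \<noteq> w2" "b1 \<noteq> b2" "(w1,b1) \<in> E" "(w1,b2) \<in> E" "(w2,b1) \<in> E" "(w2,b2) \<in> E"
  shows "ZE {w1,w2} {b1,b2} E \<omega> = \<omega> (w1,b1) * \<omega> (w2,b2) + \<omega> (w1,b2) * \<omega> (w2,b1)"
proof -
  have "ZE {w1,w2} {b1,b2} E \<omega> = (\<Sum>b\<in>{b\<in>{b1,b2}. (w1,b)\<in>E}. \<omega> (w1,b) * ZE ({w1,w2} - {w1}) ({b1,b2} - {b}) E \<omega>)"
    by (rule ZE_expand) auto
  also have "{b\<in>{b1,b2}. (w1,b)\<in>E} = {b1,b2}" using assms by auto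
  also have "{w1,w2} - {w1} = {w2}" using assms by auto
  finally have "ZE {w1,w2} {b1,b2} E \<omega> = \<omega> (w1,b1) * ZE {w2} ({b1,b2} - {b1}) E \<omega> + \<omega> (w1,b2) * ZE {w2} ({b1,b2} - {b2}) E \<omega>"
    using assms by simp
  moreover have "{b1,b2} - {b1} = {b2}" "{b1,b2} - {b2} = {b1}" using assms by auto
  ultimately show ?thesis using assms by (simp add: ZE_single)
qed

lemma subset2: "X \<subseteq> {x,y} \<Longrightarrow> X = {} \<or> X = {x} \<or> X = {y} \<or> X = {x,y}"
  by auto

lemma spider:
  assumes d: "N \<noteq> S" "Wv \<noteq> Ev"
    and e: "(N,Wv) \<in> E" "(N,Ev) \<in> E" "(S,Wv) \<in> E" "(S,Ev) \<in> E"
    and sub: "SW \<subseteq> {N,S}" "SB \<subseteq> {Wv,Ev}"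
    and D: "D = \<omega> (N,Wv) * \<omega> (S,Ev) + \<omega> (N,Ev) * \<omega> (S,Wv)" "D \<noteq> 0"
    and w': "\<omega>' (N,Wv) = \<omega> (S,Ev) / D" "\<omega>' (S,Ev) = \<omega> (N,Wv) / D"
            "\<omega>' (N,Ev) = \<omega> (S,Wv) / D" "\<omega>' (S,Wv) = \<omega> (N,Ev) / D"
  shows "ZE SW SB E \<omega> = D * ZE ({N,S} - SW) ({Wv,Ev} - SB) E \<omega>'"
proof -
  have two: "ZE {N,S} {Wv,Ev} E \<omega>' = 1 / D"
  proof -
    have "ZE {N,S} {Wv,Ev} E \<omega>' = \<omega>' (N,Wv) * \<omega>' (S,Ev) + \<omega>' (N,Ev) * \<omega>' (S,Wv)"
      by (rule ZE_two[OF d e])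
    also have "\<dots> = (\<omega> (N,Wv) * \<omega> (S,Ev) + \<omega> (N,Ev) * \<omega> (S,Wv)) / (D * D)"
      unfolding w' by (simp add: add_divide_distrib mult.commute)
    also have "\<dots> = D / (D * D)" using D(1) by simp
    finally show ?thesis using D(2) by simp
  qed
  have two0: "ZE {N,S} {Wv,Ev} E \<omega> = D" using ZE_two[OF d e] D(1) by simp
  have cN: "card {N,S} = 2" "card {Wv,Ev} = 2" using d by auto
  from subset2[OF sub(1)] subset2[OF sub(2)] show ?thesis
    using d D(2) e
    by (elim disjE) (simp_all add: ZE_empty ZE_single two two0 w' ZE_card cN insert_Diff_if)
qed

definition alphaM :: "(vtx \<times> vtx \<Rightarrow> 'f) \<Rightarrow> vtx set \<Rightarrow> vtx set \<Rightarrow> (vtx \<times> vtx) set \<Rightarrow> vtx \<Rightarrow> 'f" where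
  "alphaM \<phi> W B M = (\<lambda>v\<in>W \<union> B. if v \<in> W then \<phi> (v, THE b. (v,b) \<in> M) else \<phi> (THE w. (w,v) \<in> M, v))"

lemma pmE_uw: assumes "M \<in> pmE W B E" "w \<in> W" shows "\<exists>!b. (w,b) \<in> M"
proof -
  have "\<forall>w\<in>W. \<exists>!b. (w,b) \<in> M" using assms(1) unfolding pmE_def by simp
  then show ?thesis using assms(2) by (rule bspec)
qed

lemma pmE_ub: assumes "M \<in> pmE W B E" "b \<in> B" shows "\<exists>!w. (w,b) \<in> M"
proof -
  have "\<forall>b\<in>B. \<exists>!w. (w,b) \<in> M" using assms(1) unfolding pmE_def by simp
  then show ?thesis using assms(2) by (rule bspec)
qed

lemma alphaM_edge:
  assumes M: "M \<in> pmE W B E" and disj: "W \<inter> B = {}" and e: "(w,b) \<in> M"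
  shows "alphaM \<phi> W B M w = \<phi> (w,b)" "alphaM \<phi> W B M b = \<phi> (w,b)"
proof -
  have w: "w \<in> W" and b: "b \<in> B" using pmE_memE[OF M e] by auto
  have "(THE b'. (w,b') \<in> M) = b" by (rule the1_equality[OF pmE_uw[OF M w] e])
  then show "alphaM \<phi> W B M w = \<phi> (w,b)" unfolding alphaM_def using w by simp
  have "(THE w'. (w',b) \<in> M) = w" by (rule the1_equality[OF pmE_ub[OF M b] e])
  moreover have "b \<notin> W" using disj b by blast
  ultimately show "alphaM \<phi> W B M b = \<phi> (w,b)" unfolding alphaM_def using b by simp
qed

lemma decomp:
  fixes \<phi> :: "vtx \<times> vtx \<Rightarrow> 'f" and A :: "vtx \<Rightarrow> 'f set"
  assumes fin: "finite W" "finite B" "finite I" and disj: "W \<inter> B = {}"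
    and AI: "\<And>v. v \<in> W \<union> B \<Longrightarrow> A v \<subseteq> I"
    and phiA: "\<And>w b. w \<in> W \<Longrightarrow> b \<in> B \<Longrightarrow> (w,b) \<in> E \<Longrightarrow> \<phi> (w,b) \<in> A w \<and> \<phi> (w,b) \<in> A b"
  shows "ZE W B E \<omega> = (\<Sum>\<alpha>\<in>PiE (W\<union>B) A. \<Prod>F\<in>I. ZE {w\<in>W. \<alpha> w = F} {b\<in>B. \<alpha> b = F} {e\<in>E. \<phi> e = F} \<omega>)"
proof -
  let ?P = "PiE (W\<union>B) A"
  let ?Q = "\<lambda>\<alpha>. PiE I (\<lambda>F. pmE {w\<in>W. \<alpha> w = F} {b\<in>B. \<alpha> b = F} {e\<in>E. \<phi> e = F})"
  have finP: "finite ?P"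
  proof (rule finite_PiE)
    show "finite (W \<union> B)" using fin by simp
    fix v assume "v \<in> W \<union> B"
    then show "finite (A v)" by (meson AI finite_subset fin(3))
  qed
  have finQ: "finite (?Q \<alpha>)" for \<alpha>
    by (rule finite_PiE) (simp_all add: fin finite_pmE)
  have "(\<Sum>\<alpha>\<in>?P. \<Prod>F\<in>I. ZE {w\<in>W. \<alpha> w = F} {b\<in>B. \<alpha> b = F} {e\<in>E. \<phi> e = F} \<omega>)
      = (\<Sum>\<alpha>\<in>?P. \<Sum>Ms\<in>?Q \<alpha>. \<Prod>F\<in>I. \<Prod>e\<in>Ms F. \<omega> e)"
    unfolding ZE_def
    by (rule sum.cong[OF refl], rule prod_sum_PiE) (simp_all add: fin finite_pmE)
  also have "\<dots> = (\<Sum>(\<alpha>,Ms)\<in>Sigma ?P ?Q. \<Prod>F\<in>I. \<Prod>e\<in>Ms F. \<omega> e)"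
    by (rule sum.Sigma[OF finP]) (simp add: finQ)
  also have "\<dots> = ZE W B E \<omega>" unfolding ZE_def
  proof (rule sum.reindex_bij_witness[where j = "\<lambda>(\<alpha>,Ms). \<Union>F\<in>I. Ms F"
        and i = "\<lambda>M. (alphaM \<phi> W B M, \<lambda>F\<in>I. {e\<in>M. \<phi> e = F})"])
    fix a assume a: "a \<in> Sigma ?P ?Q"
    obtain \<alpha> Ms where aa: "a = (\<alpha>, Ms)" by (cases a)
    have al: "\<alpha> \<in> ?P" and Ms: "Ms \<in> ?Q \<alpha>" using a aa by auto
    have MsF: "Ms F \<in> pmE {w\<in>W. \<alpha> w = F} {b\<in>B. \<alpha> b = F} {e\<in>E. \<phi> e = F}" if "F \<in> I" for F
      using Ms that by auto
    have memF: "w \<in> W \<and> \<alpha> w = F \<and> b \<in> B \<and> \<alpha> b = F \<and> (w,b) \<in> E \<and> \<phi> (w,b) = F"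
      if "F \<in> I" "(w,b) \<in> Ms F" for F w b
      using pmE_memE[OF MsF[OF that(1)] that(2)] by auto
    let ?U = "\<Union>F\<in>I. Ms F"
    have c1: "w \<in> W \<and> b \<in> B \<and> (w,b) \<in> E \<and> (w,b) \<in> Ms (\<alpha> w) \<and> (w,b) \<in> Ms (\<alpha> b) \<and> \<alpha> w \<in> I
       \<and> \<phi> (w,b) = \<alpha> w \<and> \<phi> (w,b) = \<alpha> b" if U: "(w,b) \<in> ?U" for w b
    proof -
      obtain F where F: "F \<in> I" "(w,b) \<in> Ms F" using U by blast
      show ?thesis using memF[OF F] F by auto
    qed
    have alI: "\<alpha> v \<in> I" if v: "v \<in> W \<union> B" for v
    proof -
      have "\<alpha> v \<in> A v" using al v by (simp add: PiE_iff)
      then show ?thesis using AI[OF v] by blast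
    qed
    have c2: "\<exists>!b. (w,b) \<in> ?U" if w: "w \<in> W" for w
    proof -
      have "\<exists>!b. (w,b) \<in> Ms (\<alpha> w)" by (rule pmE_uw[OF MsF]) (use alI w in auto)
      then obtain b where b: "(w,b) \<in> Ms (\<alpha> w)" "\<And>b'. (w,b') \<in> Ms (\<alpha> w) \<Longrightarrow> b' = b" by blast
      show ?thesis
      proof (rule ex1I[of _ b])
        show "(w,b) \<in> ?U" using b(1) alI w by blast
        fix b' assume "(w,b') \<in> ?U"
        then show "b' = b" using c1 b(2) by blast
      qed
    qed
    have c3: "\<exists>!w. (w,b) \<in> ?U" if b: "b \<in> B" for b
    proof -
      have "\<exists>!w. (w,b) \<in> Ms (\<alpha> b)" by (rule pmE_ub[OF MsF]) (use alI b in auto)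
      then obtain w where w: "(w,b) \<in> Ms (\<alpha> b)" "\<And>w'. (w',b) \<in> Ms (\<alpha> b) \<Longrightarrow> w' = w" by blast
      show ?thesis
      proof (rule ex1I[of _ w])
        show "(w,b) \<in> ?U" using w(1) alI b by blast
        fix w' assume "(w',b) \<in> ?U"
        then show "w' = w" using c1 w(2) by blast
      qed
    qed
    have s1: "?U \<subseteq> {(w, b). w \<in> W \<and> b \<in> B \<and> (w, b) \<in> E}"
    proof
      fix e assume e: "e \<in> ?U"
      obtain w b where wb: "e = (w,b)" by (cases e)
      have "w \<in> W \<and> b \<in> B \<and> (w,b) \<in> E" using c1[of w b] e wb by blast
      then show "e \<in> {(w, b). w \<in> W \<and> b \<in> B \<and> (w, b) \<in> E}" using wb by simp
    qed
    have Upm: "?U \<in> pmE W B E" unfolding pmE_def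
      by (rule CollectI, intro conjI ballI) (fact s1, erule c2, erule c3)
    then show "(\<lambda>(\<alpha>,Ms). \<Union>F\<in>I. Ms F) a \<in> pmE W B E" using aa by simp
    have alpha_eq: "alphaM \<phi> W B ?U = \<alpha>"
    proof (rule ext)
      fix v
      show "alphaM \<phi> W B ?U v = \<alpha> v"
      proof (cases "v \<in> W")
        case True
        then obtain b where vb: "(v,b) \<in> ?U" using c2 by blast
        have "alphaM \<phi> W B ?U v = \<phi> (v,b)" by (rule alphaM_edge(1)[OF Upm disj vb])
        also have "\<dots> = \<alpha> v" using c1[OF vb] by blast
        finally show ?thesis .
      next
        case nW: False
        show ?thesis
        proof (cases "v \<in> B")
          case True
          then obtain w where wv: "(w,v) \<in> ?U" using c3 by blast
          have "alphaM \<phi> W B ?U v = \<phi> (w,v)" by (rule alphaM_edge(2)[OF Upm disj wv])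
          also have "\<dots> = \<alpha> v" using c1[OF wv] by blast
          finally show ?thesis .
        next
          case False
          then have "v \<notin> W \<union> B" using nW by blast
          then show ?thesis using PiE_arb[OF al] unfolding alphaM_def by simp
        qed
      qed
    qed
    have Ms_eq: "(\<lambda>F\<in>I. {e\<in>?U. \<phi> e = F}) = Ms"
    proof (rule ext)
      fix F
      show "(\<lambda>F\<in>I. {e\<in>?U. \<phi> e = F}) F = Ms F"
      proof (cases "F \<in> I")
        case True
        have "{e\<in>?U. \<phi> e = F} = Ms F"
        proof (intro equalityI subsetI)
          fix e assume "e \<in> {e\<in>?U. \<phi> e = F}"
          then obtain G where G: "G \<in> I" "e \<in> Ms G" "\<phi> e = F" by blast
          obtain w b where "e = (w,b)" by (cases e)
          then show "e \<in> Ms F" using memF[OF G(1)] G by auto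
        next
          fix e assume e: "e \<in> Ms F"
          obtain w b where "e = (w,b)" by (cases e)
          then show "e \<in> {e\<in>?U. \<phi> e = F}" using memF[OF True] e True by auto
        qed
        then show ?thesis using True by simp
      next
        case False
        then show ?thesis using PiE_arb[OF Ms] by simp
      qed
    qed
    show "(\<lambda>M. (alphaM \<phi> W B M, \<lambda>F\<in>I. {e\<in>M. \<phi> e = F})) ((\<lambda>(\<alpha>,Ms). \<Union>F\<in>I. Ms F) a) = a"
      unfolding aa using alpha_eq Ms_eq by simp
    have disjF: "\<forall>F\<in>I. \<forall>G\<in>I. F \<noteq> G \<longrightarrow> Ms F \<inter> Ms G = {}"
    proof (intro ballI impI)
      fix F G assume FG: "F \<in> I" "G \<in> I" "F \<noteq> G"
      show "Ms F \<inter> Ms G = {}"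
      proof (rule ccontr)
        assume "Ms F \<inter> Ms G \<noteq> {}"
        then obtain e where "e \<in> Ms F" "e \<in> Ms G" by blast
        moreover obtain w b where "e = (w,b)" by (cases e)
        ultimately have "(w,b) \<in> Ms F" "(w,b) \<in> Ms G" by auto
        then have "\<alpha> w = F" "\<alpha> w = G" using memF[OF FG(1)] memF[OF FG(2)] by blast+
        then show False using FG(3) by simp
      qed
    qed
    have finMs: "\<forall>F\<in>I. finite (Ms F)"
    proof
      fix F assume "F \<in> I"
      show "finite (Ms F)" by (rule finite_pmE_M[OF MsF[OF \<open>F \<in> I\<close>]]) (use fin in auto)
    qed
    show "(\<Prod>e\<in>(\<lambda>(\<alpha>,Ms). \<Union>F\<in>I. Ms F) a. \<omega> e) = (case a of (\<alpha>,Ms) \<Rightarrow> \<Prod>F\<in>I. \<Prod>e\<in>Ms F. \<omega> e)"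
    proof -
      have "(\<Prod>e\<in>\<Union>(Ms ` I). \<omega> e) = (\<Prod>F\<in>I. \<Prod>e\<in>Ms F. \<omega> e)"
        by (rule prod.UNION_disjoint[OF fin(3) finMs disjF])
      then show ?thesis unfolding aa by simp
    qed
  next
    fix M assume M: "M \<in> pmE W B E"
    let ?al = "alphaM \<phi> W B M"
    have edge: "(w,b) \<in> M \<Longrightarrow> ?al w = \<phi> (w,b) \<and> ?al b = \<phi> (w,b)" for w b
      using alphaM_edge[OF M disj] by blast
    have memM: "(w,b) \<in> M \<Longrightarrow> w \<in> W \<and> b \<in> B \<and> (w,b) \<in> E" for w b
      using pmE_memE[OF M] by blast
    have phiI: "\<phi> e \<in> I" if "e \<in> M" for e
    proof -
      obtain w b where e: "e = (w,b)" by (cases e)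
      then show ?thesis using memM[of w b] phiA[of w b] AI[of w] that by auto
    qed
    have "(\<Union>F\<in>I. (\<lambda>F\<in>I. {e\<in>M. \<phi> e = F}) F) = M"
    proof (intro equalityI subsetI)
      fix e assume "e \<in> (\<Union>F\<in>I. (\<lambda>F\<in>I. {e\<in>M. \<phi> e = F}) F)"
      then show "e \<in> M" by auto
    next
      fix e assume e: "e \<in> M"
      then have "\<phi> e \<in> I" by (rule phiI)
      then show "e \<in> (\<Union>F\<in>I. (\<lambda>F\<in>I. {e\<in>M. \<phi> e = F}) F)" using e by auto
    qed
    then show "(\<lambda>(\<alpha>,Ms). \<Union>F\<in>I. Ms F) ((\<lambda>M. (alphaM \<phi> W B M, \<lambda>F\<in>I. {e\<in>M. \<phi> e = F})) M) = M"
      by simp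
    have alP: "?al \<in> ?P"
    proof -
      have "?al v \<in> A v" if v: "v \<in> W \<union> B" for v
      proof (cases "v \<in> W")
        case True
        then obtain b where b: "(v,b) \<in> M" using pmE_uw[OF M] by blast
        have "?al v = \<phi> (v,b)" using edge[OF b] by blast
        moreover have "\<phi> (v,b) \<in> A v" using phiA memM[OF b] by blast
        ultimately show ?thesis by simp
      next
        case False
        then have "v \<in> B" using v by blast
        then obtain w where w: "(w,v) \<in> M" using pmE_ub[OF M] by blast
        have "?al v = \<phi> (w,v)" using edge[OF w] by blast
        moreover have "\<phi> (w,v) \<in> A v" using phiA memM[OF w] by blast
        ultimately show ?thesis by simp
      qed
      moreover have "?al \<in> extensional (W \<union> B)" unfolding alphaM_def by simp
      ultimately show ?thesis by (simp add: PiE_iff)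
    qed
    have QF: "{e\<in>M. \<phi> e = F} \<in> pmE {w\<in>W. ?al w = F} {b\<in>B. ?al b = F} {e\<in>E. \<phi> e = F}" for F
    proof -
      have s1: "{e\<in>M. \<phi> e = F} \<subseteq> {(w, b). w \<in> {w\<in>W. ?al w = F} \<and> b \<in> {b\<in>B. ?al b = F}
                  \<and> (w, b) \<in> {e\<in>E. \<phi> e = F}}"
      proof
        fix e assume e: "e \<in> {e\<in>M. \<phi> e = F}"
        obtain w b where wb: "e = (w,b)" by (cases e)
        show "e \<in> {(w, b). w \<in> {w\<in>W. ?al w = F} \<and> b \<in> {b\<in>B. ?al b = F} \<and> (w, b) \<in> {e\<in>E. \<phi> e = F}}"
          using e wb edge[of w b] memM[of w b] by auto
      qed
      have s2: "\<exists>!b. (w,b) \<in> {e\<in>M. \<phi> e = F}" if w: "w \<in> {w\<in>W. ?al w = F}" for w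
      proof -
        obtain b where b: "(w,b) \<in> M" "\<And>b'. (w,b') \<in> M \<Longrightarrow> b' = b" using pmE_uw[OF M] w by blast
        show ?thesis
        proof (rule ex1I[of _ b])
          show "(w,b) \<in> {e\<in>M. \<phi> e = F}" using b(1) edge[OF b(1)] w by simp
          fix b' assume "(w,b') \<in> {e\<in>M. \<phi> e = F}" then show "b' = b" using b(2) by simp
        qed
      qed
      have s3: "\<exists>!w. (w,b) \<in> {e\<in>M. \<phi> e = F}" if b: "b \<in> {b\<in>B. ?al b = F}" for b
      proof -
        obtain w where w: "(w,b) \<in> M" "\<And>w'. (w',b) \<in> M \<Longrightarrow> w' = w" using pmE_ub[OF M] b by blast
        show ?thesis
        proof (rule ex1I[of _ w])
          show "(w,b) \<in> {e\<in>M. \<phi> e = F}" using w(1) edge[OF w(1)] b by simp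
          fix w' assume "(w',b) \<in> {e\<in>M. \<phi> e = F}" then show "w' = w" using w(2) by simp
        qed
      qed
      show ?thesis unfolding pmE_def
        by (rule CollectI, intro conjI ballI) (fact s1, erule s2, erule s3)
    qed
    show "(\<lambda>M. (alphaM \<phi> W B M, \<lambda>F\<in>I. {e\<in>M. \<phi> e = F})) M \<in> Sigma ?P ?Q"
    proof -
      have "(\<lambda>F\<in>I. {e\<in>M. \<phi> e = F}) \<in> ?Q ?al" using QF by (simp add: PiE_iff)
      then show ?thesis using alP by simp
    qed
  qed
  finally show ?thesis by simp
qed

definition AE :: "(vtx \<times> vtx) set" where "AE = {(w,b). adj w b}"
definition Ifc :: "nat \<Rightarrow> vtx set" where
  "Ifc n = {(x,y). odd x \<and> odd y \<and> 1 \<le> x \<and> x \<le> 2 * int n - 1 \<and> 1 \<le> y \<and> y \<le> 2 * int n - 1}"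
definition Vf :: "vtx \<Rightarrow> vtx set" where
  "Vf F = {(fst F, snd F + 1), (fst F, snd F - 1), (fst F - 1, snd F), (fst F + 1, snd F)}"
definition Af :: "nat \<Rightarrow> vtx \<Rightarrow> vtx set" where
  "Af n v = {F \<in> Ifc n. v \<in> Vf F}"
definition phi :: "vtx \<times> vtx \<Rightarrow> vtx" where "phi e = (fst (fst e), snd (snd e))"
definition intv :: "nat \<Rightarrow> vtx \<Rightarrow> bool" where
  "intv n v = (if odd (fst v) then 2 \<le> snd v \<and> snd v \<le> 2 * int n - 2 else 2 \<le> fst v \<and> fst v \<le> 2 * int n - 2)"
definition refl :: "vtx \<Rightarrow> vtx \<Rightarrow> vtx" where "refl v F = (2 * fst v - fst F, 2 * snd v - snd F)"
definition uf :: "nat \<Rightarrow> vtx \<Rightarrow> vtx" where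
  "uf n v = (if odd (fst v) then (fst v, if snd v = 0 then 1 else snd v - 1)
             else (if fst v = 0 then 1 else fst v - 1, snd v))"

lemma Af_white:
  assumes "(x,y) \<in> aztec_white n"
  shows "Af n (x,y) = {F. (F = (x,y-1) \<and> 2 \<le> y) \<or> (F = (x,y+1) \<and> y \<le> 2 * int n - 2)}"
proof (intro set_eqI iffI)
  fix F assume F: "F \<in> Af n (x,y)"
  obtain p s where Fps: "F = (p,s)" by (cases F)
  have h: "odd p" "odd s" "1 \<le> p" "p \<le> 2 * int n - 1" "1 \<le> s" "s \<le> 2 * int n - 1"
    "(x,y) = (p, s+1) \<or> (x,y) = (p, s-1) \<or> (x,y) = (p-1,s) \<or> (x,y) = (p+1,s)"
    using F Fps unfolding Af_def Ifc_def Vf_def by auto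
  have a: "odd x" "even y" "1 \<le> x" "x \<le> 2 * int n - 1" "0 \<le> y" "y \<le> 2 * int n"
    using assms unfolding aztec_white_def by auto
  show "F \<in> {F. (F = (x,y-1) \<and> 2 \<le> y) \<or> (F = (x,y+1) \<and> y \<le> 2 * int n - 2)}"
    using h a Fps by (auto; presburger)
next
  fix F assume F: "F \<in> {F. (F = (x,y-1) \<and> 2 \<le> y) \<or> (F = (x,y+1) \<and> y \<le> 2 * int n - 2)}"
  have a: "odd x" "even y" "1 \<le> x" "x \<le> 2 * int n - 1" "0 \<le> y" "y \<le> 2 * int n"
    using assms unfolding aztec_white_def by auto
  show "F \<in> Af n (x,y)" using F a unfolding Af_def Ifc_def Vf_def by auto
qed

lemma Af_black:
  assumes "(x,y) \<in> aztec_black n"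
  shows "Af n (x,y) = {F. (F = (x-1,y) \<and> 2 \<le> x) \<or> (F = (x+1,y) \<and> x \<le> 2 * int n - 2)}"
proof (intro set_eqI iffI)
  fix F assume F: "F \<in> Af n (x,y)"
  obtain p s where Fps: "F = (p,s)" by (cases F)
  have h: "odd p" "odd s" "1 \<le> p" "p \<le> 2 * int n - 1" "1 \<le> s" "s \<le> 2 * int n - 1"
    "(x,y) = (p, s+1) \<or> (x,y) = (p, s-1) \<or> (x,y) = (p-1,s) \<or> (x,y) = (p+1,s)"
    using F Fps unfolding Af_def Ifc_def Vf_def by auto
  have a: "even x" "odd y" "0 \<le> x" "x \<le> 2 * int n" "1 \<le> y" "y \<le> 2 * int n - 1"
    using assms unfolding aztec_black_def by auto
  show "F \<in> {F. (F = (x-1,y) \<and> 2 \<le> x) \<or> (F = (x+1,y) \<and> x \<le> 2 * int n - 2)}"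
    using h a Fps by (auto; presburger)
next
  fix F assume F: "F \<in> {F. (F = (x-1,y) \<and> 2 \<le> x) \<or> (F = (x+1,y) \<and> x \<le> 2 * int n - 2)}"
  have a: "even x" "odd y" "0 \<le> x" "x \<le> 2 * int n" "1 \<le> y" "y \<le> 2 * int n - 1"
    using assms unfolding aztec_black_def by auto
  show "F \<in> Af n (x,y)" using F a unfolding Af_def Ifc_def Vf_def by auto
qed

lemma wb_disj: "aztec_white n \<inter> aztec_black n = {}"
  unfolding aztec_white_def aztec_black_def by auto

lemma finite_white: "finite (aztec_white n)"
proof -
  have "aztec_white n \<subseteq> {0..2 * int n} \<times> {0..2 * int n}" unfolding aztec_white_def by auto
  then show ?thesis by (rule finite_subset) simp
qed

lemma finite_black: "finite (aztec_black n)"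
proof -
  have "aztec_black n \<subseteq> {0..2 * int n} \<times> {0..2 * int n}" unfolding aztec_black_def by auto
  then show ?thesis by (rule finite_subset) simp
qed

lemma finite_Ifc: "finite (Ifc n)"
proof -
  have "Ifc n \<subseteq> {0..2 * int n} \<times> {0..2 * int n}" unfolding Ifc_def by auto
  then show ?thesis by (rule finite_subset) simp
qed

lemma Af_sub: "Af n v \<subseteq> Ifc n" unfolding Af_def by auto

lemma phiA:
  assumes w: "w \<in> aztec_white n" and b: "b \<in> aztec_black n" and e: "(w,b) \<in> AE"
  shows "phi (w,b) \<in> Af n w \<and> phi (w,b) \<in> Af n b"
proof -
  obtain x y where wxy: "w = (x,y)" by (cases w)
  obtain u v where buv: "b = (u,v)" by (cases b)
  have a: "odd x" "even y" "1 \<le> x" "x \<le> 2 * int n - 1" "0 \<le> y" "y \<le> 2 * int n"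
    using w wxy unfolding aztec_white_def by auto
  have c: "even u" "odd v" "0 \<le> u" "u \<le> 2 * int n" "1 \<le> v" "v \<le> 2 * int n - 1"
    using b buv unfolding aztec_black_def by auto
  have ad: "(u - x, v - y) \<in> {(1, 1), (-1, -1), (-1, 1), (1, -1)}"
    using e wxy buv unfolding AE_def adj_def by auto
  show ?thesis
    unfolding wxy buv Af_white[OF w[unfolded wxy]] Af_black[OF b[unfolded buv]] phi_def
    using a c ad by auto
qed

lemma refl_refl[simp]: "refl v (refl v F) = F"
  unfolding refl_def by simp

lemma refl_neq:
  assumes "v \<in> aztec_white n \<union> aztec_black n" "F \<in> Af n v"
  shows "refl v F \<noteq> F"
proof
  assume "refl v F = F"
  then have "F = v" unfolding refl_def by (auto simp: prod_eq_iff)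
  then show False using assms unfolding Af_def Ifc_def aztec_white_def aztec_black_def by auto
qed

lemma refl_Af:
  assumes v: "v \<in> aztec_white n \<union> aztec_black n" and i: "intv n v" and F: "F \<in> Af n v"
  shows "refl v F \<in> Af n v"
proof -
  obtain x y where vxy: "v = (x,y)" by (cases v)
  show ?thesis
  proof (cases "v \<in> aztec_white n")
    case True
    have "odd x" using True vxy unfolding aztec_white_def by auto
    then show ?thesis using F i unfolding vxy Af_white[OF True[unfolded vxy]] refl_def intv_def by auto
  next
    case False
    then have bl: "(x,y) \<in> aztec_black n" using v vxy by auto
    have "even x" using bl unfolding aztec_black_def by auto
    then show ?thesis using F i unfolding vxy Af_black[OF bl] refl_def intv_def by auto
  qed
qed

lemma Af_two:
  assumes v: "v \<in> aztec_white n \<union> aztec_black n" and F: "F \<in> Af n v" and G: "G \<in> Af n v"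
  shows "G = F \<or> G = refl v F"
proof -
  obtain x y where vxy: "v = (x,y)" by (cases v)
  show ?thesis
  proof (cases "v \<in> aztec_white n")
    case True
    then show ?thesis using F G unfolding vxy Af_white[OF True[unfolded vxy]] refl_def by auto
  next
    case False
    then have bl: "(x,y) \<in> aztec_black n" using v vxy by auto
    then show ?thesis using F G unfolding vxy Af_black[OF bl] refl_def by auto
  qed
qed

lemma Af_bd:
  assumes v: "v \<in> aztec_white n \<union> aztec_black n" and i: "\<not> intv n v" and n: "n \<ge> 1"
  shows "Af n v = {uf n v}"
proof -
  obtain x y where vxy: "v = (x,y)" by (cases v)
  show ?thesis
  proof (cases "v \<in> aztec_white n")
    case True
    have a: "odd x" "even y" "1 \<le> x" "x \<le> 2 * int n - 1" "0 \<le> y" "y \<le> 2 * int n"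
      using True vxy unfolding aztec_white_def by auto
    have "y = 0 \<or> y = 2 * int n" using i a unfolding vxy intv_def by (auto; presburger)
    then show ?thesis using a n unfolding vxy Af_white[OF True[unfolded vxy]] uf_def by auto
  next
    case False
    then have bl: "(x,y) \<in> aztec_black n" using v vxy by auto
    have a: "even x" "odd y" "0 \<le> x" "x \<le> 2 * int n" "1 \<le> y" "y \<le> 2 * int n - 1"
      using bl unfolding aztec_black_def by auto
    have "x = 0 \<or> x = 2 * int n" using i a unfolding vxy intv_def by (auto; presburger)
    then show ?thesis using a n unfolding vxy Af_black[OF bl] uf_def by auto
  qed
qed

definition fN :: "vtx \<Rightarrow> vtx" where "fN F = (fst F, snd F + 1)"
definition fS :: "vtx \<Rightarrow> vtx" where "fS F = (fst F, snd F - 1)"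
definition fW :: "vtx \<Rightarrow> vtx" where "fW F = (fst F - 1, snd F)"
definition fE :: "vtx \<Rightarrow> vtx" where "fE F = (fst F + 1, snd F)"

lemma white_face:
  assumes F: "F \<in> Ifc n"
  shows "{w \<in> aztec_white n. F \<in> Af n w} = {fN F, fS F}"
proof (intro set_eqI iffI)
  obtain p s where Fps: "F = (p,s)" by (cases F)
  have h: "odd p" "odd s" "1 \<le> p" "p \<le> 2 * int n - 1" "1 \<le> s" "s \<le> 2 * int n - 1"
    using F Fps unfolding Ifc_def by auto
  {
    fix w assume w: "w \<in> {w \<in> aztec_white n. F \<in> Af n w}"
    obtain x y where wxy: "w = (x,y)" by (cases w)
    have wW: "(x,y) \<in> aztec_white n" using w wxy by auto
    have "F \<in> Af n (x,y)" using w wxy by simp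
    then have "F = (x,y-1) \<or> F = (x,y+1)" unfolding Af_white[OF wW] by auto
    then show "w \<in> {fN F, fS F}" unfolding wxy fN_def fS_def by auto
  }
  {
    fix w assume w: "w \<in> {fN F, fS F}"
    then have wW: "w \<in> aztec_white n"
      unfolding fN_def fS_def Fps aztec_white_def using h by auto
    moreover have "F \<in> Af n w" using w F unfolding fN_def fS_def Af_def Vf_def by auto
    ultimately show "w \<in> {w \<in> aztec_white n. F \<in> Af n w}" by simp
  }
qed

lemma black_face:
  assumes F: "F \<in> Ifc n"
  shows "{b \<in> aztec_black n. F \<in> Af n b} = {fW F, fE F}"
proof (intro set_eqI iffI)
  obtain p s where Fps: "F = (p,s)" by (cases F)
  have h: "odd p" "odd s" "1 \<le> p" "p \<le> 2 * int n - 1" "1 \<le> s" "s \<le> 2 * int n - 1"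
    using F Fps unfolding Ifc_def by auto
  {
    fix w assume w: "w \<in> {b \<in> aztec_black n. F \<in> Af n b}"
    obtain x y where wxy: "w = (x,y)" by (cases w)
    have wW: "(x,y) \<in> aztec_black n" using w wxy by auto
    have "F \<in> Af n (x,y)" using w wxy by simp
    then have "F = (x-1,y) \<or> F = (x+1,y)" unfolding Af_black[OF wW] by auto
    then show "w \<in> {fW F, fE F}" unfolding wxy fW_def fE_def by auto
  }
  {
    fix w assume w: "w \<in> {fW F, fE F}"
    then have wW: "w \<in> aztec_black n"
      unfolding fW_def fE_def Fps aztec_black_def using h by auto
    moreover have "F \<in> Af n w" using w F unfolding fW_def fE_def Af_def Vf_def by auto
    ultimately show "w \<in> {b \<in> aztec_black n. F \<in> Af n b}" by simp
  }
qed

lemma face_edges: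
  "(fN F, fW F) \<in> {e \<in> AE. phi e = F}" "(fN F, fE F) \<in> {e \<in> AE. phi e = F}"
  "(fS F, fW F) \<in> {e \<in> AE. phi e = F}" "(fS F, fE F) \<in> {e \<in> AE. phi e = F}"
  unfolding AE_def adj_def phi_def fN_def fS_def fW_def fE_def by auto

lemma face_distinct: "fN F \<noteq> fS F" "fW F \<noteq> fE F"
  unfolding fN_def fS_def fW_def fE_def by (auto simp: prod_eq_iff)

definition opp :: "vtx \<times> vtx \<Rightarrow> vtx \<times> vtx" where
  "opp e = ((fst (fst e), 2 * snd (snd e) - snd (fst e)), (2 * fst (fst e) - fst (snd e), snd (snd e)))"

lemma opp_face: "opp (fN F, fW F) = (fS F, fE F)" "opp (fS F, fE F) = (fN F, fW F)"
  "opp (fN F, fE F) = (fS F, fW F)" "opp (fS F, fW F) = (fN F, fE F)"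
  unfolding opp_def fN_def fS_def fW_def fE_def by auto

definition WG :: "nat \<Rightarrow> vtx set \<Rightarrow> vtx set" where "WG n R = aztec_white n - R"
definition BG :: "nat \<Rightarrow> vtx set \<Rightarrow> vtx set" where "BG n R = aztec_black n - R"
definition WH :: "nat \<Rightarrow> vtx set \<Rightarrow> vtx set" where "WH n R = {w \<in> aztec_white n. intv n w \<or> w \<in> R}"
definition BH :: "nat \<Rightarrow> vtx set \<Rightarrow> vtx set" where "BH n R = {b \<in> aztec_black n. intv n b \<or> b \<in> R}"

definition bmap :: "nat \<Rightarrow> vtx set \<Rightarrow> (vtx \<Rightarrow> vtx) \<Rightarrow> vtx \<Rightarrow> vtx" where
  "bmap n R \<alpha> = (\<lambda>v \<in> WH n R \<union> BH n R. if v \<in> R then uf n v else refl v (\<alpha> v))"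
definition amap :: "nat \<Rightarrow> vtx set \<Rightarrow> (vtx \<Rightarrow> vtx) \<Rightarrow> vtx \<Rightarrow> vtx" where
  "amap n R \<beta> = (\<lambda>v \<in> WG n R \<union> BG n R. if intv n v then refl v (\<beta> v) else uf n v)"

lemma VG_iff: "v \<in> WG n R \<union> BG n R \<longleftrightarrow> v \<in> aztec_white n \<union> aztec_black n \<and> v \<notin> R"
  unfolding WG_def BG_def by auto

lemma VH_iff: "v \<in> WH n R \<union> BH n R \<longleftrightarrow> v \<in> aztec_white n \<union> aztec_black n \<and> (intv n v \<or> v \<in> R)"
  unfolding WH_def BH_def by auto

context
  fixes n :: nat and R :: "vtx set"
  assumes n: "n \<ge> 1" and Rsub: "R \<subseteq> aztec_white n \<union> aztec_black n" and Rbd: "\<forall>v\<in>R. \<not> intv n v"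
begin

lemma bmap_mem:
  assumes al: "\<alpha> \<in> PiE (WG n R \<union> BG n R) (Af n)"
  shows "bmap n R \<alpha> \<in> PiE (WH n R \<union> BH n R) (Af n)"
proof -
  have "bmap n R \<alpha> v \<in> Af n v" if v: "v \<in> WH n R \<union> BH n R" for v
  proof (cases "v \<in> R")
    case True
    then have "Af n v = {uf n v}" using Rsub Rbd n by (intro Af_bd) auto
    then show ?thesis using v True unfolding bmap_def by simp
  next
    case False
    then have vv: "v \<in> aztec_white n \<union> aztec_black n" "intv n v" "v \<in> WG n R \<union> BG n R"
      using v VH_iff VG_iff by auto
    have "\<alpha> v \<in> Af n v" using al vv(3) by (simp add: PiE_iff)
    then have "refl v (\<alpha> v) \<in> Af n v" using refl_Af vv by blast
    then show ?thesis using v False unfolding bmap_def by simp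
  qed
  then show ?thesis unfolding bmap_def by (simp add: PiE_iff)
qed

lemma amap_mem:
  assumes be: "\<beta> \<in> PiE (WH n R \<union> BH n R) (Af n)"
  shows "amap n R \<beta> \<in> PiE (WG n R \<union> BG n R) (Af n)"
proof -
  have "amap n R \<beta> v \<in> Af n v" if v: "v \<in> WG n R \<union> BG n R" for v
  proof (cases "intv n v")
    case False
    then have "Af n v = {uf n v}" using v VG_iff n by (intro Af_bd) auto
    then show ?thesis using v False unfolding amap_def by simp
  next
    case True
    then have vv: "v \<in> aztec_white n \<union> aztec_black n" "v \<in> WH n R \<union> BH n R"
      using v VH_iff VG_iff by auto
    have "\<beta> v \<in> Af n v" using be vv(2) by (simp add: PiE_iff)
    then have "refl v (\<beta> v) \<in> Af n v" using refl_Af vv True by blast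
    then show ?thesis using v True unfolding amap_def by simp
  qed
  then show ?thesis unfolding amap_def by (simp add: PiE_iff)
qed

lemma amap_bmap:
  assumes al: "\<alpha> \<in> PiE (WG n R \<union> BG n R) (Af n)"
  shows "amap n R (bmap n R \<alpha>) = \<alpha>"
proof (rule ext)
  fix v
  show "amap n R (bmap n R \<alpha>) v = \<alpha> v"
  proof (cases "v \<in> WG n R \<union> BG n R")
    case False
    then show ?thesis using PiE_arb[OF al False] unfolding amap_def by simp
  next
    case True
    then have vv: "v \<in> aztec_white n \<union> aztec_black n" "v \<notin> R" using VG_iff by auto
    have av: "\<alpha> v \<in> Af n v" using al True by (simp add: PiE_iff)
    show ?thesis
    proof (cases "intv n v")
      case True
      then have "v \<in> WH n R \<union> BH n R" using vv VH_iff by auto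
      then show ?thesis using True vv \<open>v \<in> WG n R \<union> BG n R\<close> unfolding amap_def bmap_def by simp
    next
      case False
      then have "Af n v = {uf n v}" using vv n by (intro Af_bd) auto
      then show ?thesis using False av \<open>v \<in> WG n R \<union> BG n R\<close> unfolding amap_def by simp
    qed
  qed
qed

lemma bmap_amap:
  assumes be: "\<beta> \<in> PiE (WH n R \<union> BH n R) (Af n)"
  shows "bmap n R (amap n R \<beta>) = \<beta>"
proof (rule ext)
  fix v
  show "bmap n R (amap n R \<beta>) v = \<beta> v"
  proof (cases "v \<in> WH n R \<union> BH n R")
    case False
    then show ?thesis using PiE_arb[OF be False] unfolding bmap_def by simp
  next
    case True
    then have vv: "v \<in> aztec_white n \<union> aztec_black n" "intv n v \<or> v \<in> R" using VH_iff by auto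
    have bv: "\<beta> v \<in> Af n v" using be True by (simp add: PiE_iff)
    show ?thesis
    proof (cases "v \<in> R")
      case True
      then have "Af n v = {uf n v}" using Rbd vv n by (intro Af_bd) auto
      then show ?thesis using True bv \<open>v \<in> WH n R \<union> BH n R\<close> unfolding bmap_def by simp
    next
      case False
      then have iv: "intv n v" "v \<in> WG n R \<union> BG n R" using vv VG_iff by auto
      then show ?thesis using False \<open>v \<in> WH n R \<union> BH n R\<close> unfolding amap_def bmap_def by simp
    qed
  qed
qed

lemma bmap_iff:
  assumes al: "\<alpha> \<in> PiE (WG n R \<union> BG n R) (Af n)" and v: "v \<in> aztec_white n \<union> aztec_black n"
  shows "(v \<in> WH n R \<union> BH n R \<and> bmap n R \<alpha> v = F) \<longleftrightarrow> (F \<in> Af n v \<and> \<not> (v \<in> WG n R \<union> BG n R \<and> \<alpha> v = F))"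
proof (cases "v \<in> R")
  case True
  then have Af: "Af n v = {uf n v}" using Rbd v n by (intro Af_bd) auto
  have "v \<in> WH n R \<union> BH n R" "v \<notin> WG n R \<union> BG n R" using True v VH_iff VG_iff by auto
  then show ?thesis using True Af unfolding bmap_def by auto
next
  case False
  then have vG: "v \<in> WG n R \<union> BG n R" using v VG_iff by auto
  have av: "\<alpha> v \<in> Af n v" using al vG by (simp add: PiE_iff)
  show ?thesis
  proof (cases "intv n v")
    case True
    then have vH: "v \<in> WH n R \<union> BH n R" using v VH_iff by auto
    have r: "refl v (\<alpha> v) \<in> Af n v" using refl_Af v True av by blast
    have ne: "refl v (\<alpha> v) \<noteq> \<alpha> v" using refl_neq v av by blast
    have two: "F \<in> Af n v \<Longrightarrow> F = \<alpha> v \<or> F = refl v (\<alpha> v)" using Af_two[OF v av] by blast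
    show ?thesis using vH vG False r ne two unfolding bmap_def by auto
  next
    case nI: False
    then have Af: "Af n v = {uf n v}" using v n by (intro Af_bd) auto
    have "v \<notin> WH n R \<union> BH n R" using v VH_iff nI False by auto
    then show ?thesis using Af av vG by auto
  qed
qed

lemma white_H:
  assumes al: "\<alpha> \<in> PiE (WG n R \<union> BG n R) (Af n)" and F: "F \<in> Ifc n"
  shows "{w \<in> WH n R. bmap n R \<alpha> w = F} = {fN F, fS F} - {w \<in> WG n R. \<alpha> w = F}"
proof -
  have "w \<in> {w \<in> WH n R. bmap n R \<alpha> w = F} \<longleftrightarrow> w \<in> {w \<in> aztec_white n. F \<in> Af n w} - {w \<in> WG n R. \<alpha> w = F}" for w
  proof (cases "w \<in> aztec_white n")
    case True
    have iff: "(w \<in> WH n R \<union> BH n R \<and> bmap n R \<alpha> w = F) \<longleftrightarrow> (F \<in> Af n w \<and> \<not> (w \<in> WG n R \<union> BG n R \<and> \<alpha> w = F))"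
      using bmap_iff[OF al] True by blast
    have "w \<notin> BH n R" "w \<notin> BG n R" using True wb_disj unfolding BH_def BG_def by auto
    then show ?thesis using iff True unfolding WH_def WG_def by auto
  next
    case False
    then show ?thesis unfolding WH_def by auto
  qed
  then show ?thesis using white_face[OF F] by blast
qed

lemma black_H:
  assumes al: "\<alpha> \<in> PiE (WG n R \<union> BG n R) (Af n)" and F: "F \<in> Ifc n"
  shows "{b \<in> BH n R. bmap n R \<alpha> b = F} = {fW F, fE F} - {b \<in> BG n R. \<alpha> b = F}"
proof -
  have "w \<in> {w \<in> BH n R. bmap n R \<alpha> w = F} \<longleftrightarrow> w \<in> {w \<in> aztec_black n. F \<in> Af n w} - {w \<in> BG n R. \<alpha> w = F}" for w
  proof (cases "w \<in> aztec_black n")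
    case True
    have iff: "(w \<in> WH n R \<union> BH n R \<and> bmap n R \<alpha> w = F) \<longleftrightarrow> (F \<in> Af n w \<and> \<not> (w \<in> WG n R \<union> BG n R \<and> \<alpha> w = F))"
      using bmap_iff[OF al] True by blast
    have "w \<notin> WH n R" "w \<notin> WG n R" using True wb_disj unfolding WH_def WG_def by auto
    then show ?thesis using iff True unfolding BH_def BG_def by auto
  next
    case False
    then show ?thesis unfolding BH_def by auto
  qed
  then show ?thesis using black_face[OF F] by blast
qed

theorem aztec_spider:
  fixes \<omega> :: "vtx \<times> vtx \<Rightarrow> real" and D :: real
  assumes D0: "D \<noteq> 0"
    and DF: "\<And>F. F \<in> Ifc n \<Longrightarrow> D = \<omega> (fN F, fW F) * \<omega> (fS F, fE F) + \<omega> (fN F, fE F) * \<omega> (fS F, fW F)"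
  shows "ZE (WG n R) (BG n R) AE \<omega> = D ^ card (Ifc n) * ZE (WH n R) (BH n R) AE (\<lambda>e. \<omega> (opp e) / D)"
proof -
  let ?w' = "\<lambda>e. \<omega> (opp e) / D"
  let ?EF = "\<lambda>F. {e \<in> AE. phi e = F}"
  have finG: "finite (WG n R)" "finite (BG n R)" using finite_white finite_black unfolding WG_def BG_def by auto
  have finH: "finite (WH n R)" "finite (BH n R)" using finite_white finite_black unfolding WH_def BH_def by auto
  have decG: "ZE (WG n R) (BG n R) AE \<omega> = (\<Sum>\<alpha>\<in>PiE (WG n R \<union> BG n R) (Af n).
        \<Prod>F\<in>Ifc n. ZE {w\<in>WG n R. \<alpha> w = F} {b\<in>BG n R. \<alpha> b = F} (?EF F) \<omega>)"
  proof (rule decomp[OF finG finite_Ifc])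
    show "WG n R \<inter> BG n R = {}" using wb_disj unfolding WG_def BG_def by auto
    show "\<And>v. v \<in> WG n R \<union> BG n R \<Longrightarrow> Af n v \<subseteq> Ifc n" by (rule Af_sub)
    show "\<And>w b. w \<in> WG n R \<Longrightarrow> b \<in> BG n R \<Longrightarrow> (w, b) \<in> AE \<Longrightarrow> phi (w, b) \<in> Af n w \<and> phi (w, b) \<in> Af n b"
      using phiA unfolding WG_def BG_def by blast
  qed
  have decH: "ZE (WH n R) (BH n R) AE ?w' = (\<Sum>\<beta>\<in>PiE (WH n R \<union> BH n R) (Af n).
        \<Prod>F\<in>Ifc n. ZE {w\<in>WH n R. \<beta> w = F} {b\<in>BH n R. \<beta> b = F} (?EF F) ?w')"
  proof (rule decomp[OF finH finite_Ifc])
    show "WH n R \<inter> BH n R = {}" using wb_disj unfolding WH_def BH_def by auto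
    show "\<And>v. v \<in> WH n R \<union> BH n R \<Longrightarrow> Af n v \<subseteq> Ifc n" by (rule Af_sub)
    show "\<And>w b. w \<in> WH n R \<Longrightarrow> b \<in> BH n R \<Longrightarrow> (w, b) \<in> AE \<Longrightarrow> phi (w, b) \<in> Af n w \<and> phi (w, b) \<in> Af n b"
      using phiA unfolding WH_def BH_def by blast
  qed
  have loc: "ZE {w\<in>WG n R. \<alpha> w = F} {b\<in>BG n R. \<alpha> b = F} (?EF F) \<omega>
      = D * ZE {w\<in>WH n R. bmap n R \<alpha> w = F} {b\<in>BH n R. bmap n R \<alpha> b = F} (?EF F) ?w'"
    if al: "\<alpha> \<in> PiE (WG n R \<union> BG n R) (Af n)" and F: "F \<in> Ifc n" for \<alpha> F
  proof -
    have subW: "{w\<in>WG n R. \<alpha> w = F} \<subseteq> {fN F, fS F}"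
    proof
      fix w assume w: "w \<in> {w\<in>WG n R. \<alpha> w = F}"
      then have "\<alpha> w \<in> Af n w" using al by (auto simp: PiE_iff)
      then have "w \<in> {w \<in> aztec_white n. F \<in> Af n w}" using w unfolding WG_def by auto
      then show "w \<in> {fN F, fS F}" using white_face[OF F] by blast
    qed
    have subB: "{b\<in>BG n R. \<alpha> b = F} \<subseteq> {fW F, fE F}"
    proof
      fix w assume w: "w \<in> {w\<in>BG n R. \<alpha> w = F}"
      then have "\<alpha> w \<in> Af n w" using al by (auto simp: PiE_iff)
      then have "w \<in> {w \<in> aztec_black n. F \<in> Af n w}" using w unfolding BG_def by auto
      then show "w \<in> {fW F, fE F}" using black_face[OF F] by blast
    qed
    have "ZE {w\<in>WG n R. \<alpha> w = F} {b\<in>BG n R. \<alpha> b = F} (?EF F) \<omega>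
        = D * ZE ({fN F, fS F} - {w\<in>WG n R. \<alpha> w = F}) ({fW F, fE F} - {b\<in>BG n R. \<alpha> b = F}) (?EF F) ?w'"
      by (rule spider[OF face_distinct face_edges subW subB DF[OF F] D0])
         (simp_all add: opp_face)
    then show ?thesis using white_H[OF al F] black_H[OF al F] by simp
  qed
  have "ZE (WG n R) (BG n R) AE \<omega> = (\<Sum>\<alpha>\<in>PiE (WG n R \<union> BG n R) (Af n).
        D ^ card (Ifc n) * (\<Prod>F\<in>Ifc n. ZE {w\<in>WH n R. bmap n R \<alpha> w = F} {b\<in>BH n R. bmap n R \<alpha> b = F} (?EF F) ?w'))"
    unfolding decG
    by (rule sum.cong[OF refl]) (simp add: loc prod.distrib)
  also have "\<dots> = D ^ card (Ifc n) * (\<Sum>\<alpha>\<in>PiE (WG n R \<union> BG n R) (Af n).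
        (\<lambda>\<beta>. \<Prod>F\<in>Ifc n. ZE {w\<in>WH n R. \<beta> w = F} {b\<in>BH n R. \<beta> b = F} (?EF F) ?w') (bmap n R \<alpha>))"
    by (simp add: sum_distrib_left)
  also have "(\<Sum>\<alpha>\<in>PiE (WG n R \<union> BG n R) (Af n).
        (\<lambda>\<beta>. \<Prod>F\<in>Ifc n. ZE {w\<in>WH n R. \<beta> w = F} {b\<in>BH n R. \<beta> b = F} (?EF F) ?w') (bmap n R \<alpha>))
      = (\<Sum>\<beta>\<in>PiE (WH n R \<union> BH n R) (Af n). \<Prod>F\<in>Ifc n. ZE {w\<in>WH n R. \<beta> w = F} {b\<in>BH n R. \<beta> b = F} (?EF F) ?w')"
    by (rule sum.reindex_bij_witness[where j = "bmap n R" and i = "amap n R"])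
       (auto simp: amap_bmap bmap_amap amap_mem bmap_mem)
  finally show ?thesis using decH by simp
qed

end

definition psi :: "vtx \<Rightarrow> vtx" where "psi v = (fst v - 1, snd v - 1)"
definition psi' :: "vtx \<Rightarrow> vtx" where "psi' v = (fst v + 1, snd v + 1)"

lemma psi_inv[simp]: "psi' (psi v) = v" "psi (psi' v) = v"
  unfolding psi_def psi'_def by auto

lemma psi_image: "psi ` S = {v. psi' v \<in> S}"
  by (auto simp: image_iff) (metis psi_inv(2))

definition cg :: "real \<Rightarrow> real \<Rightarrow> vtx \<Rightarrow> real" where
  "cg a q w = q powi ((snd w - fst w + 1) div 2) / (1 + a\<^sup>2 * q)"
definition dg :: "real \<Rightarrow> vtx \<Rightarrow> real" where
  "dg q b = q powi ((fst b - snd b - 1) div 2)"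

definition wp :: "nat \<Rightarrow> real \<Rightarrow> real \<Rightarrow> vtx \<times> vtx \<Rightarrow> real" where
  "wp n a q e = qdiag_weight n 1 a q (opp e) / (1 + a\<^sup>2 * q)"

lemma powi_mul: "(q::real) \<noteq> 0 \<Longrightarrow> q powi m * q powi k = q powi (m + k)"
  by (simp add: power_int_add)

lemma face_weight:
  assumes q: "q > 0"
  shows "qdiag_weight n 1 a q (fN F, fW F) * qdiag_weight n 1 a q (fS F, fE F)
       + qdiag_weight n 1 a q (fN F, fE F) * qdiag_weight n 1 a q (fS F, fW F) = 1 + a\<^sup>2 * q"
proof -
  define m where "m = min ((2 * int n - 1 - fst F) div 2) ((2 * int n - 1 - snd F) div 2)"
  have "qdiag_weight n 1 a q (fN F, fW F) = 1" "qdiag_weight n 1 a q (fS F, fE F) = 1"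
    "qdiag_weight n 1 a q (fN F, fE F) = a * q powi (- 2 * m)"
    "qdiag_weight n 1 a q (fS F, fW F) = a * q powi (2 * m + 1)"
    unfolding qdiag_weight_def Let_def fN_def fS_def fW_def fE_def m_def by auto
  moreover have "q powi (- 2 * m) * q powi (2 * m + 1) = q"
    using q by (simp add: powi_mul)
  ultimately show ?thesis by (simp add: power2_eq_square algebra_simps)
qed

lemma qT1: "qdiag_weight n bb a q ((X,Y),(X-1,Y-1)) = bb"
  unfolding qdiag_weight_def Let_def by simp
lemma qT2: "qdiag_weight n bb a q ((X,Y),(X+1,Y+1)) = bb"
  unfolding qdiag_weight_def Let_def by simp
lemma qT3: "qdiag_weight n bb a q ((X,Y),(X+1,Y-1)) =
    a * q powi (- 2 * min ((2 * int n - 1 - X) div 2) ((2 * int n - 1 - (Y - 1)) div 2))"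
  unfolding qdiag_weight_def Let_def by simp
lemma qT4: "qdiag_weight n bb a q ((X,Y),(X-1,Y+1)) =
    a * q powi (2 * min ((2 * int n - 1 - X) div 2) ((2 * int n - 1 - (Y + 1)) div 2) + 1)"
  unfolding qdiag_weight_def Let_def by simp

lemma cgdg:
  assumes q: "q > 0" and K: "(snd w - fst w + 1) div 2 + (fst b - snd b - 1) div 2 = K"
  shows "cg a q w * dg q b = q powi K / (1 + a\<^sup>2 * q)"
  unfolding cg_def dg_def using q K by (simp add: powi_mul)

lemma psi_gauge:
  assumes n: "n \<ge> 1" and q: "q > 0" and w: "odd (fst w)" "even (snd w)" and e: "(w,b) \<in> AE"
  shows "wp n a q (w,b) = cg a q w * dg q b * qdiag_weight (n-1) 1 (a*q) q (psi b, psi w)"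
proof -
  obtain x y where wxy: "w = (x,y)" by (cases w)
  have px: "odd x" "even y" using w wxy by auto
  have nn: "int (n-1) = int n - 1" using n by simp
  have ad: "b = (x+1,y+1) \<or> b = (x-1,y-1) \<or> b = (x-1,y+1) \<or> b = (x+1,y-1)"
    using e wxy unfolding AE_def adj_def by (cases b) auto
  let ?D = "1 + a\<^sup>2 * q"
  from ad show ?thesis
  proof (elim disjE)
    assume b: "b = (x+1,y+1)"
    have "opp (w,b) = ((x,y+2),(x-1,y+2-1))" unfolding opp_def b wxy by simp
    then have L: "wp n a q (w,b) = 1 / ?D" unfolding wp_def using qT1[of n 1 a q x "y+2"] by simp
    have R: "qdiag_weight (n-1) 1 (a*q) q (psi b, psi w) = 1"
      unfolding b wxy psi_def using qT1[of "n-1" 1 "a*q" q x y] by simp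
    have "cg a q w * dg q b = q powi 0 / ?D"
      by (rule cgdg[OF q]) (use px in \<open>simp add: b wxy; presburger\<close>)
    then show ?thesis using L R by simp
  next
    assume b: "b = (x-1,y-1)"
    have "opp (w,b) = ((x,y-2),(x+1,y-2+1))" unfolding opp_def b wxy by simp
    then have L: "wp n a q (w,b) = 1 / ?D" unfolding wp_def using qT2[of n 1 a q x "y-2"] by simp
    have R: "qdiag_weight (n-1) 1 (a*q) q (psi b, psi w) = 1"
      unfolding b wxy psi_def using qT2[of "n-1" 1 "a*q" q "x-2" "y-2"] by simp
    have "cg a q w * dg q b = q powi 0 / ?D"
      by (rule cgdg[OF q]) (use px in \<open>simp add: b wxy; presburger\<close>)
    then show ?thesis using L R by simp
  next
    assume b: "b = (x-1,y+1)"
    define m where "m = min ((2 * int n - 1 - x) div 2) ((2 * int n - 1 - (y + 1)) div 2)"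
    have "opp (w,b) = ((x,y+2),(x+1,y+2-1))" unfolding opp_def b wxy by simp
    then have L: "wp n a q (w,b) = a * q powi (- 2 * m) / ?D"
      unfolding wp_def m_def using qT3[of n 1 a q x "y+2"] by simp
    have x21: "x - 2 + 1 = x - 1" by simp
    have e1: "2 * int (n-1) - 1 - (x-2) = 2 * int n - 1 - x" using nn by simp
    have e2: "2 * int (n-1) - 1 - (y-1) = 2 * int n - 1 - (y+1)" using nn by simp
    have R0: "qdiag_weight (n-1) 1 (a*q) q ((x-2,y),(x-1,y-1)) = a * q * q powi (- 2 * m)"
      using qT3[of "n-1" 1 "a*q" q "x-2" y, unfolded x21 e1 e2] unfolding m_def .
    have R: "qdiag_weight (n-1) 1 (a*q) q (psi b, psi w) = a * q * q powi (- 2 * m)"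
      unfolding b wxy psi_def using R0 by simp
    have "cg a q w * dg q b = q powi (-1) / ?D"
      by (rule cgdg[OF q]) (use px in \<open>simp add: b wxy; presburger\<close>)
    moreover have "q powi (-1) * (a * q * q powi (- 2 * m)) = a * q powi (- 2 * m)"
      using q by (simp add: power_int_minus)
    ultimately show ?thesis using L R by (simp add: mult.assoc)
  next
    assume b: "b = (x+1,y-1)"
    define m where "m = min ((2 * int n - 1 - x) div 2) ((2 * int n - 1 - (y - 1)) div 2)"
    have "opp (w,b) = ((x,y-2),(x-1,y-2+1))" unfolding opp_def b wxy by simp
    then have L: "wp n a q (w,b) = a * q powi (2 * m + 1) / ?D"
      unfolding wp_def m_def using qT4[of n 1 a q x "y-2"] by simp
    have mm: "min ((2 * int (n-1) - 1 - x) div 2) ((2 * int (n-1) - 1 - (y - 2 + 1)) div 2) = m - 1"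
    proof -
      have d2: "\<And>z::int. (z - 2) div 2 = z div 2 - 1" by presburger
      have "2 * int (n-1) - 1 - x = (2 * int n - 1 - x) - 2" "2 * int (n-1) - 1 - (y - 2 + 1) = (2 * int n - 1 - (y - 1)) - 2"
        using nn by simp_all
      then show ?thesis unfolding m_def using d2 by (simp add: min_diff)
    qed
    have R: "qdiag_weight (n-1) 1 (a*q) q (psi b, psi w) = a * q * q powi (2 * (m - 1) + 1)"
      unfolding b wxy psi_def using qT4[of "n-1" 1 "a*q" q x "y-2"] mm by simp
    have cd: "cg a q w * dg q b = q powi 1 / ?D"
      by (rule cgdg[OF q]) (use px in \<open>simp add: b wxy; presburger\<close>)
    define X where "X = q powi (2 * (m - 1) + 1)"
    define Y where "Y = q powi (2 * m + 1)"
    have P: "q * q * X = Y"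
    proof -
      have "q powi (2 * (m - 1) + 1 + 2) = q powi (2 * (m - 1) + 1) * q powi 2"
        by (rule power_int_add) (use q in simp)
      moreover have "2 * (m - 1) + 1 + 2 = 2 * m + 1" by simp
      ultimately have "Y = X * q powi 2" unfolding X_def Y_def by metis
      then show ?thesis by (simp add: power2_eq_square algebra_simps)
    qed
    have "cg a q w * dg q b * qdiag_weight (n-1) 1 (a*q) q (psi b, psi w) = q / ?D * (a * q * X)"
      using cd R unfolding X_def by simp
    also have "\<dots> = a * (q * q * X) / ?D" by (simp add: algebra_simps)
    also have "\<dots> = wp n a q (w,b)" unfolding P L Y_def ..
    finally show ?thesis by simp
  qed
qed

lemma Zdiag_ZE: "Zdiag n 1 a q = ZE (WG n {}) (BG n {}) AE (qdiag_weight n 1 a q)"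
  unfolding Zdiag_def ZE_def pm_eq AE_def WG_def BG_def by simp

lemma wp_eq: "(\<lambda>e. qdiag_weight n 1 a q (opp e) / (1 + a\<^sup>2 * q)) = wp n a q"
  unfolding wp_def by (rule ext) simp

lemma spider_inst:
  assumes n: "n \<ge> 1" and q: "q > 0" and a: "a > 0"
    and Rsub: "R \<subseteq> aztec_white n \<union> aztec_black n" and Rbd: "\<forall>v\<in>R. \<not> intv n v"
  shows "ZE (WG n R) (BG n R) AE (qdiag_weight n 1 a q)
       = (1 + a\<^sup>2 * q) ^ card (Ifc n) * ZE (WH n R) (BH n R) AE (wp n a q)"
proof -
  have D0: "1 + a\<^sup>2 * q \<noteq> 0" using a q by (smt (verit) mult_pos_pos zero_less_power)
  show ?thesis
    using aztec_spider[OF n Rsub Rbd D0, of "qdiag_weight n 1 a q"] face_weight[OF q] wp_eq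
    by simp
qed

lemma gauge_map:
  assumes n: "n \<ge> 1" and q: "q > 0"
    and WS: "WS \<subseteq> aztec_white n" and BS: "BS \<subseteq> aztec_black n"
  shows "ZE WS BS AE (wp n a q) = (\<Prod>w\<in>WS. cg a q w) * (\<Prod>b\<in>BS. dg q b)
     * ZE (psi ` BS) (psi ` WS) AE (qdiag_weight (n-1) 1 (a*q) q)"
proof -
  have finW: "finite WS" using WS finite_white finite_subset by blast
  have finB: "finite BS" using BS finite_black finite_subset by blast
  have "ZE WS BS AE (wp n a q) = (\<Prod>w\<in>WS. cg a q w) * (\<Prod>b\<in>BS. dg q b)
       * ZE WS BS AE (\<lambda>(w,b). qdiag_weight (n-1) 1 (a*q) q (psi b, psi w))"
  proof (rule ZE_gauge[OF finW finB])
    fix w b assume w: "w \<in> WS" and b: "b \<in> BS" and e: "(w,b) \<in> AE"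
    have "odd (fst w)" "even (snd w)" using w WS unfolding aztec_white_def by auto
    then show "wp n a q (w,b) = cg a q w * dg q b * (\<lambda>(w,b). qdiag_weight (n-1) 1 (a*q) q (psi b, psi w)) (w,b)"
      using psi_gauge[OF n q _ _ e] by simp
  qed
  also have "ZE WS BS AE (\<lambda>(w,b). qdiag_weight (n-1) 1 (a*q) q (psi b, psi w))
      = ZE (psi ` BS) (psi ` WS) AE (qdiag_weight (n-1) 1 (a*q) q)"
  proof (rule ZE_swapmap[OF psi_inv _ _ finW finB])
    fix w b assume "w \<in> WS" "b \<in> BS"
    show "(w,b) \<in> AE \<longleftrightarrow> (psi b, psi w) \<in> AE"
      unfolding AE_def adj_def psi_def by auto
    show "(\<lambda>(w,b). qdiag_weight (n-1) 1 (a*q) q (psi b, psi w)) (w,b) = qdiag_weight (n-1) 1 (a*q) q (psi b, psi w)"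
      by simp
  qed
  finally show ?thesis .
qed

lemma psi_BH: assumes n: "n \<ge> 1" shows "psi ` BH n {} = aztec_white (n-1)"
proof -
  have nn: "int (n-1) = int n - 1" using n by simp
  show ?thesis unfolding psi_image
  proof (intro set_eqI iffI)
    fix v assume "v \<in> {v. psi' v \<in> BH n {}}"
    then show "v \<in> aztec_white (n-1)"
      unfolding BH_def aztec_black_def aztec_white_def intv_def psi'_def nn by (cases v) auto
  next
    fix v assume "v \<in> aztec_white (n-1)"
    then show "v \<in> {v. psi' v \<in> BH n {}}"
      unfolding BH_def aztec_black_def aztec_white_def intv_def psi'_def nn by (cases v) auto
  qed
qed

lemma psi_WH: assumes n: "n \<ge> 1" shows "psi ` WH n {} = aztec_black (n-1)"
proof -
  have nn: "int (n-1) = int n - 1" using n by simp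
  show ?thesis unfolding psi_image
  proof (intro set_eqI iffI)
    fix v assume "v \<in> {v. psi' v \<in> WH n {}}"
    then show "v \<in> aztec_black (n-1)"
      unfolding WH_def aztec_black_def aztec_white_def intv_def psi'_def nn by (cases v) auto
  next
    fix v assume "v \<in> aztec_black (n-1)"
    then show "v \<in> {v. psi' v \<in> WH n {}}"
      unfolding WH_def aztec_black_def aztec_white_def intv_def psi'_def nn by (cases v) auto
  qed
qed

lemma inj_psi: "inj psi"
  by (metis injI psi_inv(1))

lemma Zdiag_H:
  assumes n: "n \<ge> 1" and q: "q > 0"
  shows "ZE (WH n {}) (BH n {}) AE (wp n a q) = (\<Prod>w\<in>WH n {}. cg a q w) * (\<Prod>b\<in>BH n {}. dg q b)
     * Zdiag (n-1) 1 (a*q) q"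
proof -
  have "ZE (WH n {}) (BH n {}) AE (wp n a q) = (\<Prod>w\<in>WH n {}. cg a q w) * (\<Prod>b\<in>BH n {}. dg q b)
     * ZE (psi ` BH n {}) (psi ` WH n {}) AE (qdiag_weight (n-1) 1 (a*q) q)"
    by (rule gauge_map[OF n q]) (auto simp: WH_def BH_def)
  also have "ZE (psi ` BH n {}) (psi ` WH n {}) AE (qdiag_weight (n-1) 1 (a*q) q) = Zdiag (n-1) 1 (a*q) q"
    unfolding Zdiag_ZE psi_BH[OF n] psi_WH[OF n] WG_def BG_def by simp
  finally show ?thesis .
qed

lemma white0: "aztec_white 0 = {}" unfolding aztec_white_def by auto
lemma black0: "aztec_black 0 = {}" unfolding aztec_black_def by auto

lemma Zdiag0: "Zdiag 0 1 a q = 1"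
  unfolding Zdiag_ZE WG_def BG_def white0 black0 by (simp add: ZE_empty)

lemma cg_pos: "a > 0 \<Longrightarrow> q > 0 \<Longrightarrow> cg a q w > 0"
  unfolding cg_def by (simp add: add_pos_pos)

lemma dg_pos: "q > 0 \<Longrightarrow> dg q b > 0"
  unfolding dg_def by simp

lemma Z_rec:
  assumes n: "n \<ge> 1" and q: "q > 0" and a: "a > 0"
  shows "Zdiag n 1 a q = (1 + a\<^sup>2 * q) ^ card (Ifc n) *
     ((\<Prod>w\<in>WH n {}. cg a q w) * (\<Prod>b\<in>BH n {}. dg q b) * Zdiag (n-1) 1 (a*q) q)"
  using spider_inst[OF n q a, of "{}"] Zdiag_H[OF n q, of a] Zdiag_ZE[of n a q] by simp

lemma Z_pos: "a > 0 \<Longrightarrow> q > 0 \<Longrightarrow> Zdiag n 1 a q > 0"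
proof (induction n arbitrary: a)
  case 0
  then show ?case by (simp add: Zdiag0)
next
  case (Suc m)
  have "Zdiag m 1 (a*q) q > 0" using Suc by simp
  moreover have "(\<Prod>w\<in>WH (Suc m) {}. cg a q w) > 0" using Suc cg_pos by (simp add: prod_pos)
  moreover have "(\<Prod>b\<in>BH (Suc m) {}. dg q b) > 0" using Suc dg_pos by (simp add: prod_pos)
  moreover have "(1 + a\<^sup>2 * q) ^ card (Ifc (Suc m)) > 0" using Suc by (simp add: add_pos_pos)
  ultimately show ?case using Z_rec[of "Suc m" q a] Suc by simp
qed

definition uu :: "nat \<Rightarrow> int \<Rightarrow> vtx" where "uu n i = (2 * int n - 2 * i - 1, 2 * int n)"
definition rr :: "nat \<Rightarrow> int \<Rightarrow> vtx" where "rr n j = (2 * int n, 2 * int n - 2 * j - 1)"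
definition bk :: "nat \<Rightarrow> int \<Rightarrow> nat \<Rightarrow> vtx" where "bk n i k = (2 * int n - 2 * i - 2 + 2 * int k, 2 * int n - 1)"
definition wl :: "nat \<Rightarrow> int \<Rightarrow> nat \<Rightarrow> vtx" where "wl n j l = (2 * int n - 1, 2 * int n - 2 * j - 2 + 2 * int l)"

context
  fixes n :: nat and i j :: int
  assumes n: "n \<ge> 1" and i0: "0 \<le> i" and i1: "i \<le> int n - 1" and j0: "0 \<le> j" and j1: "j \<le> int n - 1"
begin

lemma uu_facts: "uu n i \<in> aztec_white n" "\<not> intv n (uu n i)" "uu n i \<notin> aztec_black n"
  using i0 i1 unfolding uu_def aztec_white_def aztec_black_def intv_def by auto

lemma rr_facts: "rr n j \<in> aztec_black n" "\<not> intv n (rr n j)" "rr n j \<notin> aztec_white n"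
  using j0 j1 unfolding rr_def aztec_white_def aztec_black_def intv_def by auto

lemma WH_R: "WH n {uu n i, rr n j} = insert (uu n i) (WH n {})"
  using uu_facts rr_facts unfolding WH_def by auto

lemma BH_R: "BH n {uu n i, rr n j} = insert (rr n j) (BH n {})"
  using uu_facts rr_facts unfolding BH_def by auto

lemma uu_notin: "uu n i \<notin> WH n {}" using uu_facts unfolding WH_def by auto
lemma rr_notin: "rr n j \<notin> BH n {}" using rr_facts unfolding BH_def by auto

lemma Zrem_ZE: "Zdiag_rem i j a q n = ZE (WG n {uu n i, rr n j}) (BG n {uu n i, rr n j}) AE (qdiag_weight n 1 a q)"
proof -
  have "WG n {uu n i, rr n j} = aztec_white n - {(2 * int n - 2 * i - 1, 2 * int n)}"
    using rr_facts unfolding WG_def uu_def by auto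
  moreover have "BG n {uu n i, rr n j} = aztec_black n - {(2 * int n, 2 * int n - 2 * j - 1)}"
    using uu_facts unfolding BG_def rr_def by auto
  ultimately show ?thesis using i0 i1 j0 j1 unfolding Zdiag_rem_def ZE_def pm_eq AE_def by simp
qed

lemma nbr_u: "{b \<in> insert (rr n j) (BH n {}). (uu n i, b) \<in> AE} = {x \<in> {bk n i 0, bk n i 1}. x \<in> insert (rr n j) (BH n {})}"
proof (intro set_eqI iffI)
  fix b assume b: "b \<in> {b \<in> insert (rr n j) (BH n {}). (uu n i, b) \<in> AE}"
  then have bB: "b \<in> aztec_black n" using rr_facts unfolding BH_def by auto
  obtain x y where bxy: "b = (x,y)" by (cases b)
  have "y \<le> 2 * int n - 1" using bB bxy unfolding aztec_black_def by auto
  moreover have e: "(uu n i, (x,y)) \<in> AE" using b bxy by simp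
  ultimately have "(x,y) = bk n i 0 \<or> (x,y) = bk n i 1" unfolding AE_def adj_def uu_def bk_def by auto
  then have "b = bk n i 0 \<or> b = bk n i 1" using bxy by simp
  then show "b \<in> {x \<in> {bk n i 0, bk n i 1}. x \<in> insert (rr n j) (BH n {})}" using b by auto
next
  fix b assume b: "b \<in> {x \<in> {bk n i 0, bk n i 1}. x \<in> insert (rr n j) (BH n {})}"
  then have "b = bk n i 0 \<or> b = bk n i 1" by blast
  then have "(uu n i, b) \<in> AE" unfolding AE_def adj_def uu_def bk_def by auto
  then show "b \<in> {b \<in> insert (rr n j) (BH n {}). (uu n i, b) \<in> AE}" using b by auto
qed

lemma nbr_r: "{w \<in> WH n {}. (w, rr n j) \<in> AE} = {x \<in> {wl n j 0, wl n j 1}. x \<in> WH n {}}"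
proof (intro set_eqI iffI)
  fix w assume w: "w \<in> {w \<in> WH n {}. (w, rr n j) \<in> AE}"
  then have wW: "w \<in> aztec_white n" unfolding WH_def by auto
  obtain x y where wxy: "w = (x,y)" by (cases w)
  have "x \<le> 2 * int n - 1" using wW wxy unfolding aztec_white_def by auto
  moreover have e: "((x,y), rr n j) \<in> AE" using w wxy by simp
  ultimately have "(x,y) = wl n j 0 \<or> (x,y) = wl n j 1" unfolding AE_def adj_def rr_def wl_def by auto
  then have "w = wl n j 0 \<or> w = wl n j 1" using wxy by simp
  then show "w \<in> {x \<in> {wl n j 0, wl n j 1}. x \<in> WH n {}}" using w by auto
next
  fix w assume w: "w \<in> {x \<in> {wl n j 0, wl n j 1}. x \<in> WH n {}}"
  then have "w = wl n j 0 \<or> w = wl n j 1" by blast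
  then have "(w, rr n j) \<in> AE" unfolding AE_def adj_def rr_def wl_def by auto
  then show "w \<in> {w \<in> WH n {}. (w, rr n j) \<in> AE}" using w by auto
qed

lemma bk_distinct: "bk n i 0 \<noteq> bk n i 1" "wl n j 0 \<noteq> wl n j 1" "bk n i 0 \<noteq> rr n j"
  "bk n i 1 = rr n j \<longleftrightarrow> i = 0 \<and> j = 0"
  using i0 unfolding bk_def wl_def rr_def by auto

lemma bk_in: "k \<le> 1 \<Longrightarrow> bk n i k \<in> BH n {} \<longleftrightarrow> 0 \<le> i - int k \<and> i - int k \<le> int (n-1) - 1"
  using i0 i1 n unfolding bk_def BH_def aztec_black_def intv_def by auto

lemma wl_in: "l \<le> 1 \<Longrightarrow> wl n j l \<in> WH n {} \<longleftrightarrow> 0 \<le> j - int l \<and> j - int l \<le> int (n-1) - 1"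
  using j0 j1 n unfolding wl_def WH_def aztec_white_def intv_def by auto

end

lemma qT4': "min ((2 * int m - 1 - X) div 2) ((2 * int m - 1 - (Y + 1)) div 2) = M \<Longrightarrow>
   qdiag_weight m bb a q ((X,Y),(X-1,Y+1)) = a * q powi (2 * M + 1)"
  using qT4[of m bb a q X Y] by simp

definition CC :: "nat \<Rightarrow> real \<Rightarrow> real \<Rightarrow> real" where
  "CC n a q = (\<Prod>w\<in>WH n {}. cg a q w) * (\<Prod>b\<in>BH n {}. dg q b)"

definition Tt :: "nat \<Rightarrow> int \<Rightarrow> int \<Rightarrow> real \<Rightarrow> real \<Rightarrow> nat \<Rightarrow> nat \<Rightarrow> real" where
  "Tt n i j a q k l = (if bk n i k \<in> BH n {} \<and> wl n j l \<in> WH n {} then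
     wp n a q (uu n i, bk n i k) * wp n a q (wl n j l, rr n j) *
     ZE (WH n {} - {wl n j l}) (BH n {} - {bk n i k}) AE (wp n a q) else 0)"

lemma sum_two_filter: "x \<noteq> y \<Longrightarrow> (\<Sum>z\<in>{z\<in>{x,y}. P z}. f z) = (if P x then f x else 0) + (if P y then f y else 0)"
  by (subst sum.inter_filter) simp_all

lemma finWH: "finite (WH n R)" using finite_white unfolding WH_def by auto
lemma finBH: "finite (BH n R)" using finite_black unfolding BH_def by auto

context
  fixes n :: nat and i j :: int and a q :: real
  assumes n: "n \<ge> 1" and i0: "0 \<le> i" and i1: "i \<le> int n - 1" and j0: "0 \<le> j" and j1: "j \<le> int n - 1"
    and a: "a > 0" and q: "q > 0"
begin

lemma nn: "int (n-1) = int n - 1" using n by simp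

lemma V1: assumes k: "k \<le> (1::nat)"
  shows "qdiag_weight (n-1) 1 (a*q) q (psi (bk n i k), psi (uu n i)) = a ^ k"
proof (cases "k = 0")
  case True
  have eq: "(psi (bk n i 0), psi (uu n i)) = ((2 * int n - 2 * i - 3, 2 * int n - 2), (2 * int n - 2 * i - 3 + 1, 2 * int n - 2 + 1))"
    unfolding psi_def bk_def uu_def by simp
  show ?thesis unfolding True eq power_0 by (rule qT2)
next
  case False
  then have k1: "k = 1" using k by simp
  have e: "(psi (bk n i k), psi (uu n i)) = ((2 * int n - 2 * i - 1, 2 * int n - 2), (2 * int n - 2 * i - 1 - 1, 2 * int n - 2 + 1))"
    unfolding psi_def bk_def uu_def k1 by simp
  have "min ((2 * int (n-1) - 1 - (2 * int n - 2 * i - 1)) div 2) ((2 * int (n-1) - 1 - (2 * int n - 2 + 1)) div 2) = -1"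
    unfolding nn using i0 by presburger
  then have "qdiag_weight (n-1) 1 (a*q) q (psi (bk n i k), psi (uu n i)) = a * q * q powi (2 * (-1) + 1)"
    unfolding e by (rule qT4')
  then show ?thesis using q k1 by (simp add: power_int_minus)
qed

lemma V2: assumes l: "l \<le> (1::nat)"
  shows "qdiag_weight (n-1) 1 (a*q) q (psi (rr n j), psi (wl n j l)) = a ^ l"
proof (cases "l = 0")
  case True
  have eq: "(psi (rr n j), psi (wl n j 0)) = ((2 * int n - 1, 2 * int n - 2 * j - 2), (2 * int n - 1 - 1, 2 * int n - 2 * j - 2 - 1))"
    unfolding psi_def rr_def wl_def by simp
  show ?thesis unfolding True eq power_0 by (rule qT1)
next
  case False
  then have l1: "l = 1" using l by simp
  have e: "(psi (rr n j), psi (wl n j l)) = ((2 * int n - 1, 2 * int n - 2 * j - 2), (2 * int n - 1 - 1, 2 * int n - 2 * j - 2 + 1))"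
    unfolding psi_def rr_def wl_def l1 by simp
  have "min ((2 * int (n-1) - 1 - (2 * int n - 1)) div 2) ((2 * int (n-1) - 1 - (2 * int n - 2 * j - 2 + 1)) div 2) = -1"
    unfolding nn using j0 by presburger
  then have "qdiag_weight (n-1) 1 (a*q) q (psi (rr n j), psi (wl n j l)) = a * q * q powi (2 * (-1) + 1)"
    unfolding e by (rule qT4')
  then show ?thesis using q l1 by (simp add: power_int_minus)
qed

lemma cg_uu: "cg a q (uu n i) = q powi (i + 1) / (1 + a\<^sup>2 * q)"
proof -
  have "(snd (uu n i) - fst (uu n i) + 1) div 2 = i + 1" unfolding uu_def by simp
  then show ?thesis unfolding cg_def by simp
qed

lemma dg_rr: "dg q (rr n j) = q powi j"
proof -
  have "(fst (rr n j) - snd (rr n j) - 1) div 2 = j" unfolding rr_def by simp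
  then show ?thesis unfolding dg_def by simp
qed

lemma adj_u: "(uu n i, bk n i k) \<in> AE" if "k \<le> 1" for k
  using that unfolding AE_def adj_def uu_def bk_def by (cases "k = 0") auto

lemma adj_r: "(wl n j l, rr n j) \<in> AE" if "l \<le> 1" for l
  using that unfolding AE_def adj_def rr_def wl_def by (cases "l = 0") auto

lemma uu_par: "odd (fst (uu n i))" "even (snd (uu n i))" unfolding uu_def by auto
lemma wl_par: "odd (fst (wl n j l))" "even (snd (wl n j l))" unfolding wl_def by auto

lemma wp_ur: assumes "i = 0" "j = 0" shows "wp n a q (uu n i, rr n j) = a * q / (1 + a\<^sup>2 * q)"
proof -
  have e: "(uu n i, rr n j) \<in> AE" using assms unfolding AE_def adj_def uu_def rr_def by auto
  have "wp n a q (uu n i, rr n j) = cg a q (uu n i) * dg q (rr n j) * qdiag_weight (n-1) 1 (a*q) q (psi (rr n j), psi (uu n i))"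
    by (rule psi_gauge[OF n q uu_par e])
  moreover have ee: "(psi (rr n j), psi (uu n i)) = ((2 * int n - 1, 2 * int n - 2), (2 * int n - 1 - 1, 2 * int n - 2 + 1))"
    unfolding psi_def rr_def uu_def assms by simp
  have "min ((2 * int (n-1) - 1 - (2 * int n - 1)) div 2) ((2 * int (n-1) - 1 - (2 * int n - 2 + 1)) div 2) = -1"
    unfolding nn by presburger
  then have "qdiag_weight (n-1) 1 (a*q) q (psi (rr n j), psi (uu n i)) = a * q * q powi (2 * (-1) + 1)"
    unfolding ee by (rule qT4')
  moreover have "cg a q (uu n i) * dg q (rr n j) = q / (1 + a\<^sup>2 * q)"
    unfolding cg_uu dg_rr using assms by simp
  ultimately show ?thesis using q by (simp add: power_int_minus)
qed

lemma term_in: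
  assumes k: "k \<le> 1" and l: "l \<le> 1" and bin: "bk n i k \<in> BH n {}" and win: "wl n j l \<in> WH n {}"
  shows "Tt n i j a q k l = cg a q (uu n i) * dg q (rr n j) * a^k * a^l * CC n a q * Zdiag_rem (i - int k) (j - int l) (a*q) q (n-1)"
proof -
  let ?w1 = "qdiag_weight (n-1) 1 (a*q) q"
  let ?b = "bk n i k" and ?w = "wl n j l"
  have g: "ZE (WH n {} - {?w}) (BH n {} - {?b}) AE (wp n a q) = (\<Prod>w\<in>WH n {} - {?w}. cg a q w) * (\<Prod>b\<in>BH n {} - {?b}. dg q b)
     * ZE (psi ` (BH n {} - {?b})) (psi ` (WH n {} - {?w})) AE ?w1"
    by (rule gauge_map[OF n q]) (auto simp: WH_def BH_def)
  have im1: "psi ` (BH n {} - {?b}) = aztec_white (n-1) - {psi ?b}"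
    by (simp add: image_set_diff[OF inj_psi] psi_BH[OF n])
  have im2: "psi ` (WH n {} - {?w}) = aztec_black (n-1) - {psi ?w}"
    by (simp add: image_set_diff[OF inj_psi] psi_WH[OF n])
  have pb: "psi ?b = (2 * int (n-1) - 2 * (i - int k) - 1, 2 * int (n-1))"
    unfolding psi_def bk_def nn by simp
  have pw: "psi ?w = (2 * int (n-1), 2 * int (n-1) - 2 * (j - int l) - 1)"
    unfolding psi_def wl_def nn by simp
  have rng: "0 \<le> i - int k" "i - int k \<le> int (n-1) - 1" "0 \<le> j - int l" "j - int l \<le> int (n-1) - 1"
    using bk_in[OF n i0 i1 j0 j1 k] wl_in[OF n i0 i1 j0 j1 l] bin win by auto
  have Zr: "Zdiag_rem (i - int k) (j - int l) (a*q) q (n-1) = ZE (aztec_white (n-1) - {psi ?b}) (aztec_black (n-1) - {psi ?w}) AE ?w1"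
    unfolding Zdiag_rem_def ZE_def pm_eq AE_def pb pw using rng by simp
  have cw: "cg a q ?w \<noteq> 0" using cg_pos[OF a q] by (metis less_irrefl)
  have db: "dg q ?b \<noteq> 0" using dg_pos[OF q] by (metis less_irrefl)
  have p1: "(\<Prod>w\<in>WH n {} - {?w}. cg a q w) = (\<Prod>w\<in>WH n {}. cg a q w) / cg a q ?w"
    using prod_diff1[of "WH n {}" "cg a q" "wl n j l", OF finWH cw] win by simp
  have p2: "(\<Prod>b\<in>BH n {} - {?b}. dg q b) = (\<Prod>b\<in>BH n {}. dg q b) / dg q ?b"
    using prod_diff1[of "BH n {}" "dg q" "bk n i k", OF finBH db] bin by simp
  have w1: "wp n a q (uu n i, ?b) = cg a q (uu n i) * dg q ?b * a^k"
    using psi_gauge[OF n q uu_par adj_u[OF k]] V1[OF k] by simp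
  have w2: "wp n a q (?w, rr n j) = cg a q ?w * dg q (rr n j) * a^l"
    using psi_gauge[OF n q wl_par adj_r[OF l]] V2[OF l] by simp
  have "Tt n i j a q k l = (cg a q (uu n i) * dg q ?b * a^k) * (cg a q ?w * dg q (rr n j) * a^l) *
      ((\<Prod>w\<in>WH n {}. cg a q w) / cg a q ?w * ((\<Prod>b\<in>BH n {}. dg q b) / dg q ?b)
       * Zdiag_rem (i - int k) (j - int l) (a*q) q (n-1))"
    unfolding Tt_def using bin win w1 w2 g im1 im2 Zr p1 p2 by simp
  also have "\<dots> = cg a q (uu n i) * dg q (rr n j) * a^k * a^l * CC n a q * Zdiag_rem (i - int k) (j - int l) (a*q) q (n-1)"
    unfolding CC_def using cw db by (simp add: field_simps)
  finally show ?thesis .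
qed

lemma term_out:
  assumes k: "k \<le> 1" and l: "l \<le> 1" and out: "\<not> (bk n i k \<in> BH n {} \<and> wl n j l \<in> WH n {})"
  shows "Tt n i j a q k l = 0" "Zdiag_rem (i - int k) (j - int l) (a*q) q (n-1) = 0"
proof -
  show "Tt n i j a q k l = 0" using out unfolding Tt_def by auto
  have "\<not> (0 \<le> i - int k \<and> i - int k \<le> int (n-1) - 1 \<and> 0 \<le> j - int l \<and> j - int l \<le> int (n-1) - 1)"
    using bk_in[OF n i0 i1 j0 j1 k] wl_in[OF n i0 i1 j0 j1 l] out by auto
  then show "Zdiag_rem (i - int k) (j - int l) (a*q) q (n-1) = 0" unfolding Zdiag_rem_def by auto
qed

lemma T_val:
  assumes k: "k \<le> 1" and l: "l \<le> 1"
  shows "Tt n i j a q k l = cg a q (uu n i) * dg q (rr n j) * a^k * a^l * CC n a q * Zdiag_rem (i - int k) (j - int l) (a*q) q (n-1)"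
proof (cases "bk n i k \<in> BH n {} \<and> wl n j l \<in> WH n {}")
  case True
  then show ?thesis using term_in[OF k l] by blast
next
  case False
  then show ?thesis using term_out[OF k l False] by simp
qed

lemma gk:
  assumes k: "k \<le> 1"
  shows "(if bk n i k \<in> insert (rr n j) (BH n {}) then wp n a q (uu n i, bk n i k) *
           ZE (WH n {}) (insert (rr n j) (BH n {}) - {bk n i k}) AE (wp n a q) else 0)
       = (if bk n i k = rr n j then wp n a q (uu n i, rr n j) * ZE (WH n {}) (BH n {}) AE (wp n a q) else 0)
         + Tt n i j a q k 0 + Tt n i j a q k 1"
proof -
  let ?b = "bk n i k" and ?r = "rr n j"
  have rn: "?r \<notin> BH n {}" by (rule rr_notin[OF n i0 i1 j0 j1])
  show ?thesis
  proof (cases "?b = ?r")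
    case True
    then have "?b \<notin> BH n {}" using rn by simp
    moreover have "insert ?r (BH n {}) - {?b} = BH n {}" using True rn by auto
    ultimately show ?thesis using True unfolding Tt_def by simp
  next
    case ne: False
    show ?thesis
    proof (cases "?b \<in> BH n {}")
      case bin: True
      have s: "insert ?r (BH n {}) - {?b} = insert ?r (BH n {} - {?b})" using ne by auto
      have "ZE (WH n {}) (insert ?r (BH n {} - {?b})) AE (wp n a q)
          = (\<Sum>w\<in>{w\<in>WH n {}. (w,?r)\<in>AE}. wp n a q (w,?r) * ZE (WH n {} - {w}) (insert ?r (BH n {} - {?b}) - {?r}) AE (wp n a q))"
        by (rule ZE_expand_black) (auto simp: finWH finBH)
      also have "\<dots> = (\<Sum>w\<in>{x\<in>{wl n j 0, wl n j 1}. x \<in> WH n {}}. wp n a q (w,?r) * ZE (WH n {} - {w}) (BH n {} - {?b}) AE (wp n a q))"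
      proof -
        have "insert ?r (BH n {} - {?b}) - {?r} = BH n {} - {?b}" using rn by auto
        then show ?thesis unfolding nbr_r[OF n i0 i1 j0 j1] by simp
      qed
      also have "\<dots> = (if wl n j 0 \<in> WH n {} then wp n a q (wl n j 0,?r) * ZE (WH n {} - {wl n j 0}) (BH n {} - {?b}) AE (wp n a q) else 0)
          + (if wl n j 1 \<in> WH n {} then wp n a q (wl n j 1,?r) * ZE (WH n {} - {wl n j 1}) (BH n {} - {?b}) AE (wp n a q) else 0)"
        by (rule sum_two_filter) (rule bk_distinct[OF n i0 i1 j0 j1])
      finally have e: "ZE (WH n {}) (insert ?r (BH n {} - {?b})) AE (wp n a q) = \<dots>" .
      show ?thesis using bin ne unfolding Tt_def s e by (simp add: algebra_simps)
    next
      case bout: False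
      then have "?b \<notin> insert ?r (BH n {})" using ne by simp
      then show ?thesis using ne bout unfolding Tt_def by simp
    qed
  qed
qed

lemma ZHp:
  "ZE (insert (uu n i) (WH n {})) (insert (rr n j) (BH n {})) AE (wp n a q)
   = Tt n i j a q 0 0 + Tt n i j a q 0 1 + Tt n i j a q 1 0 + Tt n i j a q 1 1
     + (if i = 0 \<and> j = 0 then wp n a q (uu n i, rr n j) * ZE (WH n {}) (BH n {}) AE (wp n a q) else 0)"
proof -
  let ?g = "\<lambda>x. if x \<in> insert (rr n j) (BH n {}) then wp n a q (uu n i, x) *
           ZE (WH n {}) (insert (rr n j) (BH n {}) - {x}) AE (wp n a q) else 0"
  have "ZE (insert (uu n i) (WH n {})) (insert (rr n j) (BH n {})) AE (wp n a q)
     = (\<Sum>b\<in>{b\<in>insert (rr n j) (BH n {}). (uu n i, b) \<in> AE}. wp n a q (uu n i, b) *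
          ZE (insert (uu n i) (WH n {}) - {uu n i}) (insert (rr n j) (BH n {}) - {b}) AE (wp n a q))"
    by (rule ZE_expand) (auto simp: finWH finBH)
  also have "insert (uu n i) (WH n {}) - {uu n i} = WH n {}" using uu_notin[OF n i0 i1 j0 j1] by auto
  also have "(\<Sum>b\<in>{b\<in>insert (rr n j) (BH n {}). (uu n i, b) \<in> AE}. wp n a q (uu n i, b) *
          ZE (WH n {}) (insert (rr n j) (BH n {}) - {b}) AE (wp n a q)) = ?g (bk n i 0) + ?g (bk n i 1)"
    unfolding nbr_u[OF n i0 i1 j0 j1] by (rule sum_two_filter) (rule bk_distinct[OF n i0 i1 j0 j1])
  also have "\<dots> = (if bk n i 0 = rr n j then wp n a q (uu n i, rr n j) * ZE (WH n {}) (BH n {}) AE (wp n a q) else 0)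
         + Tt n i j a q 0 0 + Tt n i j a q 0 1
         + ((if bk n i 1 = rr n j then wp n a q (uu n i, rr n j) * ZE (WH n {}) (BH n {}) AE (wp n a q) else 0)
         + Tt n i j a q 1 0 + Tt n i j a q 1 1)"
    using gk[of 0] gk[of 1] by simp
  finally show ?thesis using bk_distinct[OF n i0 i1 j0 j1] by simp
qed

end

lemma S_sum:
  fixes f :: "nat \<Rightarrow> nat \<Rightarrow> real" and i j :: int
  assumes i0: "0 \<le> i" and j0: "0 \<le> j" and f11: "i = 0 \<and> j = 0 \<Longrightarrow> f 1 1 = 0"
  shows "(\<Sum>(k, l)\<in>{(k::nat, l::nat). k \<le> 1 \<and> l \<le> 1 \<and> (i - int k, j - int l) \<noteq> (-1, -1)}. f k l)
     = f 0 0 + f 0 1 + f 1 0 + f 1 1"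
proof -
  let ?S = "{(k::nat, l::nat). k \<le> 1 \<and> l \<le> 1 \<and> (i - int k, j - int l) \<noteq> (-1, -1)}"
  let ?T = "{(0::nat,0::nat),(0,1),(1,0),(1,1)}"
  have ST: "?S \<subseteq> ?T"
  proof
    fix x assume "x \<in> ?S"
    then obtain k l where x: "x = (k,l)" "k \<le> 1" "l \<le> 1" by auto
    then have "k = 0 \<or> k = 1" "l = 0 \<or> l = 1" by auto
    then show "x \<in> ?T" using x by auto
  qed
  have "(\<Sum>(k, l)\<in>?S. f k l) = (\<Sum>(k, l)\<in>?T. f k l)"
  proof (rule sum.mono_neutral_left[OF _ ST])
    show "finite ?T" by simp
    show "\<forall>x\<in>?T - ?S. (case x of (k, l) \<Rightarrow> f k l) = 0"
    proof
      fix x assume x: "x \<in> ?T - ?S"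
      then have "x = (1,1) \<and> i = 0 \<and> j = 0" using i0 j0 by auto
      then show "(case x of (k, l) \<Rightarrow> f k l) = 0" using f11 by auto
    qed
  qed
  also have "\<dots> = f 0 0 + f 0 1 + f 1 0 + f 1 1" by simp
  finally show ?thesis .
qed

theorem lemma5p2:
  fixes a q :: real and n :: nat and i j :: int
  assumes "a > 0" and "q > 0" and "n \<ge> 1"
    and "0 \<le> i" and "i \<le> int n - 1" and "0 \<le> j" and "j \<le> int n - 1"
  shows "Zdiag_rem i j a q n / Zdiag n 1 a q =
    q powi (i + j + 1) *
      ((\<Sum>(k, l)\<in>{(k::nat, l::nat). k \<le> 1 \<and> l \<le> 1 \<and> (i - int k, j - int l) \<noteq> (-1, -1)}.
          a ^ (k + l) * Zdiag_rem (i - int k) (j - int l) (a * q) q (n - 1)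
            / ((1 + a\<^sup>2 * q) * Zdiag (n - 1) 1 (a * q) q))
       + a * (if (i, j) = (0, 0) \<and> n \<ge> 1 then 1 else 0) / (1 + a\<^sup>2 * q))"
proof -
  note a = assms(1) and q = assms(2) and n = assms(3) and i0 = assms(4) and i1 = assms(5)
    and j0 = assms(6) and j1 = assms(7)
  define D where "D = 1 + a\<^sup>2 * q"
  have D0: "D > 0" unfolding D_def using a q by (simp add: add_pos_pos)
  define N where "N = card (Ifc n)"
  define C where "C = CC n a q"
  define Z' where "Z' = Zdiag (n-1) 1 (a*q) q"
  define Zr where "Zr = (\<lambda>k l. Zdiag_rem (i - int k) (j - int l) (a * q) q (n - 1))"
  define Q where "Q = q powi (i + j + 1)"
  have aq: "a * q > 0" using a q by simp
  have Zp: "Z' > 0" unfolding Z'_def by (rule Z_pos[OF aq q])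
  have Cp: "C > 0" unfolding C_def CC_def using cg_pos[OF a q] dg_pos[OF q]
    by (simp add: prod_pos)
  have Zn: "Zdiag n 1 a q = D ^ N * (C * Z')"
    using Z_rec[OF n q a] unfolding CC_def D_def N_def C_def Z'_def by (simp add: mult.assoc)
  have ZH: "ZE (WH n {}) (BH n {}) AE (wp n a q) = C * Z'"
    using Zdiag_H[OF n q, of a] unfolding C_def CC_def Z'_def by simp
  have Rsub: "{uu n i, rr n j} \<subseteq> aztec_white n \<union> aztec_black n"
    using uu_facts[OF n i0 i1 j0 j1] rr_facts[OF n i0 i1 j0 j1] by auto
  have Rbd: "\<forall>v\<in>{uu n i, rr n j}. \<not> intv n v"
    using uu_facts[OF n i0 i1 j0 j1] rr_facts[OF n i0 i1 j0 j1] by auto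
  have Zrn: "Zdiag_rem i j a q n = D ^ N * ZE (insert (uu n i) (WH n {})) (insert (rr n j) (BH n {})) AE (wp n a q)"
    using Zrem_ZE[OF n i0 i1 j0 j1, of a q] spider_inst[OF n q a Rsub Rbd]
      WH_R[OF n i0 i1 j0 j1] BH_R[OF n i0 i1 j0 j1] unfolding D_def N_def by simp
  have P: "cg a q (uu n i) * dg q (rr n j) = Q / D"
    unfolding cg_uu[OF n i0 i1 j0 j1 a q] dg_rr[OF n i0 i1 j0 j1 a q] Q_def D_def
    using q by (simp add: powi_mul add.commute add.left_commute)
  have T: "Tt n i j a q k l = Q / D * a^k * a^l * C * Zr k l" if "k \<le> 1" "l \<le> 1" for k l
    using T_val[OF n i0 i1 j0 j1 a q that] P unfolding C_def Zr_def by simp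
  define E where "E = (if i = 0 \<and> j = 0 then a * q / D * (C * Z') else 0)"
  have E: "(if i = 0 \<and> j = 0 then wp n a q (uu n i, rr n j) * ZE (WH n {}) (BH n {}) AE (wp n a q) else 0) = E"
    unfolding E_def ZH using wp_ur[OF n i0 i1 j0 j1 a q] unfolding D_def by auto
  have X: "ZE (insert (uu n i) (WH n {})) (insert (rr n j) (BH n {})) AE (wp n a q)
     = Q / D * C * (Zr 0 0 + a * Zr 0 1 + a * Zr 1 0 + a * a * Zr 1 1) + E"
    using ZHp[OF n i0 i1 j0 j1 a q] T[of 0 0] T[of 0 1] T[of 1 0] T[of 1 1] E
    by (simp add: algebra_simps)
  have Z11: "i = 0 \<and> j = 0 \<Longrightarrow> Zr 1 1 = 0" unfolding Zr_def Zdiag_rem_def by auto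
  have Ssum: "(\<Sum>(k, l)\<in>{(k::nat, l::nat). k \<le> 1 \<and> l \<le> 1 \<and> (i - int k, j - int l) \<noteq> (-1, -1)}.
          a ^ (k + l) * Zdiag_rem (i - int k) (j - int l) (a * q) q (n - 1)
            / ((1 + a\<^sup>2 * q) * Zdiag (n - 1) 1 (a * q) q))
      = (Zr 0 0 + a * Zr 0 1 + a * Zr 1 0 + a * a * Zr 1 1) / (D * Z')"
  proof -
    have "(\<Sum>(k, l)\<in>{(k::nat, l::nat). k \<le> 1 \<and> l \<le> 1 \<and> (i - int k, j - int l) \<noteq> (-1, -1)}.
          a ^ (k + l) * Zdiag_rem (i - int k) (j - int l) (a * q) q (n - 1)
            / ((1 + a\<^sup>2 * q) * Zdiag (n - 1) 1 (a * q) q))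
      = (\<Sum>(k, l)\<in>{(k::nat, l::nat). k \<le> 1 \<and> l \<le> 1 \<and> (i - int k, j - int l) \<noteq> (-1, -1)}.
          a ^ (k + l) * Zr k l / (D * Z'))"
      unfolding Zr_def D_def Z'_def ..
    also have "\<dots> = a ^ (0 + 0) * Zr 0 0 / (D * Z') + a ^ (0 + 1) * Zr 0 1 / (D * Z')
        + a ^ (1 + 0) * Zr 1 0 / (D * Z') + a ^ (1 + 1) * Zr 1 1 / (D * Z')"
      by (rule S_sum[OF i0 j0, of "\<lambda>k l. a ^ (k + l) * Zr k l / (D * Z')"]) (use Z11 in simp)
    also have "\<dots> = (Zr 0 0 + a * Zr 0 1 + a * Zr 1 0 + a * a * Zr 1 1) / (D * Z')"
      by (simp add: add_divide_distrib power2_eq_square)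
    finally show ?thesis .
  qed
  have DN: "D ^ N > 0" using D0 by simp
  have lhs: "Zdiag_rem i j a q n / Zdiag n 1 a q
      = (Q / D * C * (Zr 0 0 + a * Zr 0 1 + a * Zr 1 0 + a * a * Zr 1 1) + E) / (C * Z')"
    unfolding Zrn Zn X using DN D0 by simp
  show ?thesis
  proof (cases "i = 0 \<and> j = 0")
    case True
    have Qq: "Q = q" unfolding Q_def using True by simp
    have I1: "(if (i, j) = (0, 0) \<and> n \<ge> 1 then 1 else 0) = (1::real)" using True n by auto
    have E1: "E = a * q / D * (C * Z')" unfolding E_def by (rule if_P[OF True])
    show ?thesis unfolding lhs Ssum I1 E1
      using Qq D0 Cp Zp unfolding D_def[symmetric] Q_def[symmetric]
      by (simp add: field_simps)
  next
    case False
    then have I0: "(if (i, j) = (0, 0) \<and> n \<ge> 1 then 1 else 0) = (0::real)" by auto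
    have E0: "E = 0" unfolding E_def by (rule if_not_P[OF False])
    show ?thesis unfolding lhs Ssum I0 E0
      using D0 Cp Zp unfolding D_def[symmetric] Q_def[symmetric]
      by (simp add: field_simps)
  qed
qed

end
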